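(* Suppose the splitting condition $\sum_{j=1}^mP_jv=v$ for all $v\in H_0$ holds. Then for every $x\in H$ with $\langle x,R_0x\rangle>0$ and every $n\ge0$, $\mathbb E_{\nu_x}[M_n]\le(1-1/m)^n\langle x,R_0x\rangle$, and $\langle x,R_\infty(\omega)x\rangle=0$ for $\nu_x$-almost every $\omega$.
   Context: Let $H$ be a complex Hilbert space, $m\ge2$, $P_1,\dots,P_m$ orthogonal projections on $H$, $R_0\in B(H)_+$, and $H_0=\overline{\mathrm{ran}}(R_0^{1/2})$. Let $\mathcal A=\{1,\dots,m\}$, $\mathcal W$ the set of finite words over $\mathcal A$ (including the empty word $\emptyset$); for nonempty $w=j_1\cdots j_n$, $w^-=j_1\cdots j_{n-1}$, and $wj$ is concatenation. WR energy tree: $R_\emptyset=R_0$, and for $w=j_1\cdots j_n$, $n\ge1$, $R_w=R_{w^-}^{1/2}(I-P_{j_n})R_{w^-}^{1/2}$, $D_w=R_{w^-}^{1/2}P_{j_n}R_{w^-}^{1/2}$. $\Omega=\mathcal A^{\mathbb N}$; for $\omega=(j_1,j_2,\dots)$, $\omega|_n=j_1\cdots j_n$, $\omega|_0=\emptyset$; cylinders $[w]=\{\omega:\omega|_{|w|}=w\}$. $R_\infty(\omega)$ is the strong limit of the Loewner-decreasing sequence $R_{\omega|_n}$. $M_n(\omega)=\langle x,R_{\omega|_n}x\rangle$. Energy-biased path measure: with $x$ fixed, $a_{wj}=\langle x,D_{wj}x\rangle$, a fixed probability vector $q$ on $\mathcal A$, $p_x(j\mid w)=a_{wj}/\sum_k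 a_{wk}$ if $\sum_ka_{wk}>0$ and $p_x(j\mid w)=q_j$ otherwise; $\nu_x$ is the unique Borel probability measure on $\Omega$ with $\nu_x([j_1\cdots j_n])=\prod_{i=1}^n p_x(j_i\mid j_1\cdots j_{i-1})$. *)

theory Defs
  imports "HOL-Analysis.Analysis" "HOL-Probability.Probability"
begin

(* A complex Hilbert space H is modelled as a real Hilbert space
   ('a::{real_inner,complete_space}, real inner product = Re of the complex one)
   together with its multiplication-by-i map J. *)
definition cstruct :: "('a::{real_inner,complete_space} \<Rightarrow> 'a) \<Rightarrow> bool" where
  "cstruct J \<longleftrightarrow> bounded_linear J \<and> (\<forall>x. J (J x) = - x) \<and> (\<forall>x y. inner (J x) (J y) = inner x y)"

definition is_op :: "('a::{real_inner,complete_space} \<Rightarrow> 'a) \<Rightarrow> ('a \<Rightarrow> 'a) \<Rightarrow> bool" where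
  "is_op J T \<longleftrightarrow> bounded_linear T \<and> (\<forall>x. T (J x) = J (T x))"

definition pos_op :: "('a::{real_inner,complete_space} \<Rightarrow> 'a) \<Rightarrow> ('a \<Rightarrow> 'a) \<Rightarrow> bool" where
  "pos_op J T \<longleftrightarrow> is_op J T \<and> (\<forall>x y. inner (T x) y = inner x (T y)) \<and> (\<forall>x. 0 \<le> inner x (T x))"

definition orth_proj :: "('a::{real_inner,complete_space} \<Rightarrow> 'a) \<Rightarrow> ('a \<Rightarrow> 'a) \<Rightarrow> bool" where
  "orth_proj J T \<longleftrightarrow> is_op J T \<and> (\<forall>x y. inner (T x) y = inner x (T y)) \<and> (\<forall>x. T (T x) = T x)"

definition op_sqrt :: "('a::{real_inner,complete_space} \<Rightarrow> 'a) \<Rightarrow> ('a \<Rightarrow> 'a)" where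
  "op_sqrt T = (THE S. bounded_linear S \<and> (\<forall>x y. inner (S x) y = inner x (S y))
                      \<and> (\<forall>x. 0 \<le> inner x (S x)) \<and> S \<circ> S = T)"

(* energy tree, indexed by the reversed word (last letter first) *)
fun Rrev :: "(nat \<Rightarrow> 'a \<Rightarrow> 'a) \<Rightarrow> ('a::{real_inner,complete_space} \<Rightarrow> 'a) \<Rightarrow> nat list \<Rightarrow> 'a \<Rightarrow> 'a" where
  "Rrev P R0 [] = R0"
| "Rrev P R0 (j # w) = op_sqrt (Rrev P R0 w) \<circ> (\<lambda>y. y - P j y) \<circ> op_sqrt (Rrev P R0 w)"

definition Rw :: "(nat \<Rightarrow> 'a \<Rightarrow> 'a) \<Rightarrow> ('a::{real_inner,complete_space} \<Rightarrow> 'a) \<Rightarrow> nat list \<Rightarrow> 'a \<Rightarrow> 'a" where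
  "Rw P R0 w = Rrev P R0 (rev w)"

definition Dw :: "(nat \<Rightarrow> 'a \<Rightarrow> 'a) \<Rightarrow> ('a::{real_inner,complete_space} \<Rightarrow> 'a) \<Rightarrow> nat list \<Rightarrow> nat \<Rightarrow> 'a \<Rightarrow> 'a" where
  "Dw P R0 w j = op_sqrt (Rw P R0 w) \<circ> P j \<circ> op_sqrt (Rw P R0 w)"

definition Omega :: "nat \<Rightarrow> (nat \<Rightarrow> nat) measure" where
  "Omega m = PiM UNIV (\<lambda>_. count_space {1..m})"

definition prefix :: "(nat \<Rightarrow> nat) \<Rightarrow> nat \<Rightarrow> nat list" where
  "prefix \<omega> n = map \<omega> [0..<n]"

definition cyl :: "nat \<Rightarrow> nat list \<Rightarrow> (nat \<Rightarrow> nat) set" where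
  "cyl m w = {\<omega> \<in> space (Omega m). prefix \<omega> (length w) = w}"

definition pcond :: "(nat \<Rightarrow> 'a \<Rightarrow> 'a) \<Rightarrow> ('a::{real_inner,complete_space} \<Rightarrow> 'a) \<Rightarrow> nat \<Rightarrow> (nat \<Rightarrow> real)
                     \<Rightarrow> 'a \<Rightarrow> nat list \<Rightarrow> nat \<Rightarrow> real" where
  "pcond P R0 m q x w j =
     (let s = (\<Sum>k=1..m. inner x (Dw P R0 w k x))
      in if s > 0 then inner x (Dw P R0 w j x) / s else q j)"

definition nu :: "(nat \<Rightarrow> 'a \<Rightarrow> 'a) \<Rightarrow> ('a::{real_inner,complete_space} \<Rightarrow> 'a) \<Rightarrow> nat \<Rightarrow> (nat \<Rightarrow> real)
                  \<Rightarrow> 'a \<Rightarrow> (nat \<Rightarrow> nat) measure" where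
  "nu P R0 m q x = (THE N. sets N = sets (Omega m) \<and> prob_space N \<and>
      (\<forall>w. set w \<subseteq> {1..m} \<longrightarrow>
          emeasure N (cyl m w) = ennreal (\<Prod>i<length w. pcond P R0 m q x (take i w) (w ! i))))"

definition Rinf :: "(nat \<Rightarrow> 'a \<Rightarrow> 'a) \<Rightarrow> ('a::{real_inner,complete_space} \<Rightarrow> 'a) \<Rightarrow> (nat \<Rightarrow> nat) \<Rightarrow> 'a \<Rightarrow> 'a" where
  "Rinf P R0 \<omega> y = lim (\<lambda>n. Rw P R0 (prefix \<omega> n) y)"

end

theory Submission
  imports Defs "HOL-Computational_Algebra.Formal_Power_Series"
begin

lemma bilinear_Cauchy_product_sums:
  fixes a :: "nat \<Rightarrow> 'a::real_normed_vector" and b :: "nat \<Rightarrow> 'b::real_normed_vector"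
    and prod :: "'a \<Rightarrow> 'b \<Rightarrow> 'c::real_normed_vector"
  assumes bb: "bounded_bilinear prod"
    and a: "summable (\<lambda>k. norm (a k))" and b: "summable (\<lambda>k. norm (b k))"
    and lim: "(\<lambda>n. prod (\<Sum>k<n. a k) (\<Sum>k<n. b k)) \<longlonglongrightarrow> L"
  shows "(\<lambda>k. \<Sum>i\<le>k. prod (a i) (b (k - i))) sums L"
proof -
  interpret bounded_bilinear prod by (rule bb)
  obtain K where K: "K > 0" "\<And>x y. norm (prod x y) \<le> norm x * norm y * K"
    using pos_bounded by blast
  let ?S1 = "\<lambda>n::nat. {..<n} \<times> {..<n}"
  let ?S2 = "\<lambda>n::nat. {(i,j). i + j < n}"
  have S1_mono: "\<And>m n. m \<le> n \<Longrightarrow> ?S1 m \<subseteq> ?S1 n" by auto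
  have S2_le_S1: "\<And>n. ?S2 n \<subseteq> ?S1 n" by auto
  have S1_le_S2: "\<And>n. ?S1 (n div 2) \<subseteq> ?S2 n" by auto
  have finite_S1: "\<And>n. finite (?S1 n)" by simp
  with S2_le_S1 have finite_S2: "\<And>n. finite (?S2 n)" by (rule finite_subset)
  let ?g = "\<lambda>(i,j). prod (a i) (b j)"
  let ?f = "\<lambda>(i,j). norm (a i) * norm (b j)"
  have f_nonneg: "\<And>x. 0 \<le> ?f x" by auto
  then have norm_sum_f: "\<And>A. norm (sum ?f A) = sum ?f A"
    unfolding real_norm_def
    by (simp only: abs_of_nonneg sum_nonneg [rule_format])
  have sp: "\<And>n. prod (\<Sum>k<n. a k) (\<Sum>k<n. b k) = sum ?g (?S1 n)"
    by (simp add: sum_left sum_right sum.cartesian_product[symmetric]) (rule sum.swap)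
  have 1: "(\<lambda>n. sum ?g (?S1 n)) \<longlonglongrightarrow> L"
    using lim by (simp only: sp)
  have "(\<lambda>n. (\<Sum>k<n. norm (a k)) * (\<Sum>k<n. norm (b k))) \<longlonglongrightarrow> (\<Sum>k. norm (a k)) * (\<Sum>k. norm (b k))"
    using a b by (intro tendsto_mult summable_LIMSEQ)
  then have "(\<lambda>n. sum ?f (?S1 n)) \<longlonglongrightarrow> (\<Sum>k. norm (a k)) * (\<Sum>k. norm (b k))"
    by (simp only: sum_product sum.Sigma [rule_format] finite_lessThan)
  then have "convergent (\<lambda>n. sum ?f (?S1 n))"
    by (rule convergentI)
  then have Cauchy: "Cauchy (\<lambda>n. sum ?f (?S1 n))"
    by (rule convergent_Cauchy)
  have "Zfun (\<lambda>n. sum ?f (?S1 n - ?S2 n)) sequentially"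
  proof (rule ZfunI, simp only: eventually_sequentially norm_sum_f)
    fix r :: real
    assume r: "0 < r"
    from CauchyD [OF Cauchy r] obtain N
      where "\<forall>m\<ge>N. \<forall>n\<ge>N. norm (sum ?f (?S1 m) - sum ?f (?S1 n)) < r" ..
    then have "\<And>m n. N \<le> n \<Longrightarrow> n \<le> m \<Longrightarrow> norm (sum ?f (?S1 m - ?S1 n)) < r"
      by (simp only: sum_diff finite_S1 S1_mono)
    then have N: "\<And>m n. N \<le> n \<Longrightarrow> n \<le> m \<Longrightarrow> sum ?f (?S1 m - ?S1 n) < r"
      by (simp only: norm_sum_f)
    show "\<exists>N. \<forall>n\<ge>N. sum ?f (?S1 n - ?S2 n) < r"
    proof (intro exI allI impI)
      fix n
      assume "2 * N \<le> n"
      then have n: "N \<le> n div 2" by simp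
      have "sum ?f (?S1 n - ?S2 n) \<le> sum ?f (?S1 n - ?S1 (n div 2))"
        by (intro sum_mono2 finite_Diff finite_S1 f_nonneg Diff_mono subset_refl S1_le_S2)
      also have "\<dots> < r"
        using n div_le_dividend by (rule N)
      finally show "sum ?f (?S1 n - ?S2 n) < r" .
    qed
  qed
  then have "Zfun (\<lambda>n. sum ?g (?S1 n - ?S2 n)) sequentially"
  proof (rule Zfun_imp_Zfun[where K=K], intro always_eventually allI)
    fix n
    have "norm (sum ?g (?S1 n - ?S2 n)) \<le> (\<Sum>p\<in>?S1 n - ?S2 n. norm (?g p))"
      by (rule norm_sum)
    also have "\<dots> \<le> (\<Sum>p\<in>?S1 n - ?S2 n. ?f p * K)"
      by (intro sum_mono) (auto simp: K)
    also have "\<dots> = norm (sum ?f (?S1 n - ?S2 n)) * K"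
      by (simp only: norm_sum_f sum_distrib_right)
    finally show "norm (sum ?g (?S1 n - ?S2 n)) \<le> norm (sum ?f (?S1 n - ?S2 n)) * K" .
  qed
  then have 2: "(\<lambda>n. sum ?g (?S1 n) - sum ?g (?S2 n)) \<longlonglongrightarrow> 0"
    unfolding tendsto_Zfun_iff diff_0_right
    by (simp only: sum_diff finite_S1 S2_le_S1)
  with 1 have "(\<lambda>n. sum ?g (?S2 n)) \<longlonglongrightarrow> L"
    by (rule Lim_transform2)
  then show ?thesis
    by (simp only: sums_def sum.triangle_reindex)
qed

lemma summable_norm_cancel_cs:
  fixes f :: "nat \<Rightarrow> 'a::{real_normed_vector, complete_space}"
  assumes f: "summable (\<lambda>n. norm (f n))"
  shows "summable f"
proof -
  have C: "\<forall>e>0. \<exists>N. \<forall>m\<ge>N. \<forall>n. norm (sum (\<lambda>k. norm (f k)) {m..<n}) < e"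
    using f unfolding summable_Cauchy .
  have "Cauchy (\<lambda>n. \<Sum>k<n. f k)"
  proof (rule metric_CauchyI)
    fix e :: real assume "e > 0"
    then obtain N where N: "\<And>m n. m \<ge> N \<Longrightarrow> norm (sum (\<lambda>k. norm (f k)) {m..<n}) < e"
      using C by blast
    have d: "dist (\<Sum>k<m. f k) (\<Sum>k<n. f k) < e" if "N \<le> m" "m \<le> n" for m n
    proof -
      have "(\<Sum>k<n. f k) - (\<Sum>k<m. f k) = (\<Sum>k\<in>{m..<n}. f k)"
        using sum_diff_nat_ivl[of 0 m n f] that by (simp add: atLeast0LessThan)
      hence "dist (\<Sum>k<m. f k) (\<Sum>k<n. f k) = norm (\<Sum>k\<in>{m..<n}. f k)"
        by (metis dist_norm dist_commute)
      also have "\<dots> \<le> (\<Sum>k\<in>{m..<n}. norm (f k))" by (rule norm_sum)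
      also have "\<dots> \<le> norm (sum (\<lambda>k. norm (f k)) {m..<n})" by simp
      also have "\<dots> < e" using N that by blast
      finally show ?thesis .
    qed
    show "\<exists>M. \<forall>m\<ge>M. \<forall>n\<ge>M. dist (\<Sum>k<m. f k) (\<Sum>k<n. f k) < e"
    proof (intro exI allI impI)
      fix m n assume "N \<le> m" "N \<le> n"
      show "dist (\<Sum>k<m. f k) (\<Sum>k<n. f k) < e"
      proof (cases "m \<le> n")
        case True thus ?thesis using d[of m n] \<open>N \<le> m\<close> by blast
      next
        case False
        hence "dist (\<Sum>k<n. f k) (\<Sum>k<m. f k) < e" using d[of n m] \<open>N \<le> n\<close> by simp
        thus ?thesis by (simp only: dist_commute)
      qed
    qed
  qed
  thus ?thesis unfolding summable_iff_convergent by (rule Cauchy_convergent)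
qed

definition cf :: "nat \<Rightarrow> real" where "cf k = (-1)^k * ((1/2) gchoose k)"
definition pq :: "nat \<Rightarrow> real" where "pq N = (-1)^N * ((-1/2) gchoose N)"

lemma cf_partial: "(\<Sum>k\<le>N. cf k) = pq N"
  using gbinomial_sum_lower_neg[of "1/2::real" N] by (simp add: cf_def pq_def mult.commute)

lemma pq_Suc: "pq (Suc N) = pq N * ((2 * real N + 1) / (2 * real N + 2))"
proof -
  have "(-1/2::real) * ((-1/2) gchoose N) = real N * ((-1/2) gchoose N) + real (Suc N) * ((-1/2) gchoose (Suc N))"
    by (rule gbinomial_mult_1)
  hence "(real N + 1) * ((-1/2::real) gchoose (Suc N)) = - ((-1/2) gchoose N) * (real N + 1/2)"
    by (simp add: algebra_simps)
  hence "((-1/2::real) gchoose (Suc N)) = - ((-1/2) gchoose N) * (real N + 1/2) / (real N + 1)"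
    by (simp add: field_simps)
  hence "((-1/2::real) gchoose (Suc N)) = - ((-1/2) gchoose N) * ((2 * real N + 1) / (2 * real N + 2))"
    by (simp add: field_simps)
  thus ?thesis by (simp add: pq_def)
qed

lemma pq_pos: "pq N > 0"
  by (induction N) (auto simp: pq_Suc, simp add: pq_def)

lemma pq_sq: "(pq N)^2 \<le> 1 / (2 * real N + 1)"
proof (induction N)
  case 0 then show ?case by (simp add: pq_def)
next
  case (Suc N)
  have "(pq (Suc N))^2 = (pq N)^2 * ((2 * real N + 1) / (2 * real N + 2))^2"
    unfolding pq_Suc by (simp only: power_mult_distrib)
  also have "\<dots> \<le> 1 / (2 * real N + 1) * ((2 * real N + 1) / (2 * real N + 2))^2"
    by (rule mult_right_mono[OF Suc]) simp
  also have "\<dots> = (2 * real N + 1) / (2 * real N + 2)^2"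
  proof -
    have g: "\<And>a d::real. a > 0 \<Longrightarrow> d > 0 \<Longrightarrow> 1/a * (a/d)^2 = a / d^2"
      by (simp add: power2_eq_square field_simps)
    show ?thesis by (rule g) auto
  qed
  also have "\<dots> \<le> 1 / (2 * real (Suc N) + 1)"
  proof -
    have g: "\<And>a::real. a > 0 \<Longrightarrow> a / (a+1)^2 \<le> 1 / (a + 2)"
    proof -
      fix a :: real assume "a > 0"
      hence "a * (a + 2) \<le> 1 * (a+1)^2" "(a+1)^2 > 0" "a + 2 > 0"
        by (auto simp: power2_eq_square algebra_simps intro: add_pos_nonneg)
      thus "a / (a+1)^2 \<le> 1 / (a + 2)" by (simp add: frac_le_eq divide_le_eq le_divide_eq)
    qed
    have "(2 * real N + 1) / (2 * real N + 1 + 1)^2 \<le> 1 / (2 * real N + 1 + 2)"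
      by (rule g) auto
    thus ?thesis by (simp add: algebra_simps)
  qed
  finally show ?case .
qed

lemma pq_lim: "pq \<longlonglongrightarrow> 0"
proof -
  have "(\<lambda>N. (pq N)^2) \<longlonglongrightarrow> 0"
  proof (rule tendsto_sandwich[of "\<lambda>_. 0" _ _ "\<lambda>N. inverse (real (Suc N))"])
    show "\<forall>\<^sub>F n in sequentially. 0 \<le> (pq n)\<^sup>2" by simp
    show "\<forall>\<^sub>F n in sequentially. (pq n)\<^sup>2 \<le> inverse (real (Suc n))"
    proof (intro always_eventually allI)
      fix n
      have "(pq n)^2 \<le> 1 / (2 * real n + 1)" by (rule pq_sq)
      also have "\<dots> \<le> inverse (real (Suc n))" by (simp add: field_simps)
      finally show "(pq n)\<^sup>2 \<le> inverse (real (Suc n))" .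
    qed
    show "(\<lambda>N. inverse (real (Suc N))) \<longlonglongrightarrow> 0" by (rule LIMSEQ_inverse_real_of_nat)
  qed simp
  hence "(\<lambda>N. sqrt ((pq N)^2)) \<longlonglongrightarrow> sqrt 0" by (rule tendsto_real_sqrt)
  thus ?thesis using pq_pos by (simp add: less_imp_le)
qed

lemma cf_0: "cf 0 = 1" by (simp add: cf_def)

lemma cf_Suc_nonpos: "cf (Suc N) \<le> 0"
proof -
  have "cf (Suc N) = pq (Suc N) - pq N"
    using cf_partial[of "Suc N"] cf_partial[of N] by simp
  also have "\<dots> = pq N * ((2 * real N + 1) / (2 * real N + 2) - 1)"
    by (simp add: pq_Suc algebra_simps)
  also have "\<dots> \<le> 0" using pq_pos[of N]
    by (intro mult_nonneg_nonpos) (auto simp: field_simps)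
  finally show ?thesis .
qed

lemma cf_sums: "cf sums 0"
  unfolding sums_def
proof -
  have "(\<lambda>n. \<Sum>k<Suc n. cf k) \<longlonglongrightarrow> 0"
    by (simp only: lessThan_Suc_atMost cf_partial pq_lim)
  thus "(\<lambda>n. \<Sum>k<n. cf k) \<longlonglongrightarrow> 0" by (rule LIMSEQ_imp_Suc)
qed

lemma abs_cf: "\<bar>cf k\<bar> = (if k = 0 then 2 else 0) - cf k"
  by (cases k) (auto simp: cf_0 cf_Suc_nonpos)

lemma summable_abs_cf: "summable (\<lambda>k. \<bar>cf k\<bar>)"
proof -
  have "summable (\<lambda>k. (if k = 0 then 2 else 0) - cf k :: real)"
  proof (rule summable_diff)
    show "summable (\<lambda>k. (if k = 0 then 2 else 0) :: real)"
      by (rule summable_finite[of "{0}"]) auto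
    show "summable cf" by (rule sums_summable[OF cf_sums])
  qed
  thus ?thesis by (simp only: abs_cf)
qed

lemma cf_cauchy: "(\<Sum>i\<le>n. cf i * cf (n - i)) = (if n = 0 then 1 else if n = 1 then -1 else 0)"
proof -
  have "(\<Sum>i\<le>n. cf i * cf (n - i)) = (\<Sum>i=0..n. (-1)^n * (((1/2) gchoose i) * ((1/2) gchoose (n - i))))"
    by (intro sum.cong) (auto simp: cf_def atLeast0AtMost power_add[symmetric])
  also have "\<dots> = (-1)^n * ((1::real) gchoose n)"
    by (simp add: sum_distrib_left[symmetric] gbinomial_Vandermonde)
  also have "\<dots> = (-1)^n * real (1 choose n)"
    using binomial_gbinomial[of 1 n, where 'a=real] by simp
  also have "\<dots> = (if n = 0 then 1 else if n = 1 then -1 else 0)"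
    by (cases n) (auto simp: binomial_eq_0)
  finally show ?thesis .
qed

definition selfadj :: "('a::real_inner \<Rightarrow> 'a) \<Rightarrow> bool" where
  "selfadj T \<longleftrightarrow> (\<forall>x y. inner (T x) y = inner x (T y))"

definition posop :: "('a::real_inner \<Rightarrow> 'a) \<Rightarrow> bool" where
  "posop T \<longleftrightarrow> bounded_linear T \<and> selfadj T \<and> (\<forall>x. 0 \<le> inner x (T x))"

lemma quad_disc:
  fixes a b c :: real
  assumes c: "c \<ge> 0" and h: "\<And>t. 0 \<le> a + 2*t*b + t^2*c"
  shows "b^2 \<le> a * c"
proof (cases "c = 0")
  case True
  have "b = 0"
  proof (rule ccontr)
    assume b: "b \<noteq> 0"
    have "0 \<le> a + 2*(-(a+1)/(2*b))*b + (-(a+1)/(2*b))^2*c" by (rule h)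
    also have "\<dots> = -1" using b True by (simp add: field_simps)
    finally show False by simp
  qed
  thus ?thesis using h[of 0] True by simp
next
  case False
  hence cp: "c > 0" using c by simp
  have "0 \<le> a + 2*(-b/c)*b + (-b/c)^2*c" by (rule h)
  also have "\<dots> = a - b^2/c" using cp by (simp add: field_simps power2_eq_square)
  finally have "b^2/c \<le> a" by simp
  thus ?thesis using cp by (simp add: divide_le_eq mult.commute)
qed

lemma posopD:
  assumes "posop T"
  shows "bounded_linear T" "\<And>x y. inner (T x) y = inner x (T y)" "\<And>x. 0 \<le> inner x (T x)"
  using assms by (auto simp: posop_def selfadj_def)

lemma pos_cs:
  assumes T: "posop T"
  shows "(inner u (T v))^2 \<le> inner u (T u) * inner v (T v)"
proof -
  interpret bounded_linear T using posopD[OF T] by simp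
  have sym: "inner v (T u) = inner u (T v)"
    using posopD(2)[OF T, of v u] by (simp add: inner_commute)
  show ?thesis
  proof (rule quad_disc)
    show "0 \<le> inner v (T v)" by (rule posopD(3)[OF T])
    fix t :: real
    have "0 \<le> inner (u + t *\<^sub>R v) (T (u + t *\<^sub>R v))" by (rule posopD(3)[OF T])
    also have "\<dots> = inner u (T u) + 2*t*inner u (T v) + t^2 * inner v (T v)"
      by (simp add: add scaleR inner_add_left inner_add_right sym power2_eq_square algebra_simps)
    finally show "0 \<le> inner u (T u) + 2*t*inner u (T v) + t^2 * inner v (T v)" .
  qed
qed

lemma posop_zero:
  assumes T: "posop T" and z: "inner y (T y) = 0"
  shows "T y = 0"
proof -
  have "(inner (T y) (T y))^2 \<le> inner (T y) (T (T y)) * inner y (T y)"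
    using pos_cs[OF T, of "T y" y] posopD(2)[OF T, of y "T y"] by (simp add: inner_commute)
  hence "(inner (T y) (T y))^2 \<le> 0" using z by simp
  thus ?thesis by simp
qed

lemma posop_norm:
  assumes T: "posop T" and K: "K \<ge> 0" and h: "\<And>y. inner y (T y) \<le> K * (norm y)^2"
  shows "norm (T y) \<le> K * norm y"
proof (cases "T y = 0")
  case True thus ?thesis using K by simp
next
  case False
  let ?z = "T y"
  have "(inner ?z ?z)^2 \<le> inner ?z (T ?z) * inner y (T y)"
    using pos_cs[OF T, of ?z y] posopD(2)[OF T, of y ?z] by (simp add: inner_commute)
  also have "\<dots> \<le> (K * (norm ?z)^2) * (K * (norm y)^2)"
    by (intro mult_mono h) (auto intro: posopD(3)[OF T] K mult_nonneg_nonneg)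
  finally have "(norm ?z)^2 * (norm ?z)^2 \<le> (norm ?z)^2 * (K * norm y)^2"
    by (simp add: power2_norm_eq_inner[symmetric] power2_eq_square algebra_simps)
  moreover have "(norm ?z)^2 > 0" using False by simp
  ultimately have "(norm ?z)^2 \<le> (K * norm y)^2"
    by (rule mult_left_le_imp_le)
  thus ?thesis by (rule power2_le_imp_le) (simp add: K)
qed

primrec bpow :: "('a::real_normed_vector \<Rightarrow>\<^sub>L 'a) \<Rightarrow> nat \<Rightarrow> ('a \<Rightarrow>\<^sub>L 'a)" where
  "bpow A 0 = id_blinfun"
| "bpow A (Suc k) = A o\<^sub>L bpow A k"

lemma bpow_norm: "norm A \<le> 1 \<Longrightarrow> norm (bpow A k) \<le> 1"
proof (induction k)
  case 0 thus ?case by (simp add: norm_blinfun_id_le)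
next
  case (Suc k)
  have "norm (bpow A (Suc k)) \<le> norm A * norm (bpow A k)" by (simp add: norm_blinfun_compose)
  also have "\<dots> \<le> 1 * 1" using Suc by (intro mult_mono) auto
  finally show ?case by simp
qed

lemma bpow_add: "bpow A (i + j) = bpow A i o\<^sub>L bpow A j"
  by (induction i) (auto intro!: blinfun_eqI)

lemma bpow_comm:
  assumes "\<And>y. F (blinfun_apply A y) = blinfun_apply A (F y)"
  shows "F (bpow A k y) = bpow A k (F y)"
  using assms by (induction k arbitrary: y) auto

lemma bpow_selfadj:
  assumes "selfadj (blinfun_apply A)"
  shows "selfadj (blinfun_apply (bpow A k))"
proof (induction k)
  case 0 thus ?case by (simp add: selfadj_def)
next
  case (Suc k)
  show ?case unfolding selfadj_def
  proof (intro allI)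
    fix x y
    have "inner ((bpow A (Suc k)) x) y = inner (A (bpow A k x)) y" by simp
    also have "\<dots> = inner (bpow A k x) (A y)" using assms unfolding selfadj_def by blast
    also have "\<dots> = inner x (bpow A k (A y))" using Suc unfolding selfadj_def by blast
    also have "\<dots> = inner x (A (bpow A k y))" using bpow_comm[of "blinfun_apply A" A k y] by simp
    finally show "inner ((bpow A (Suc k)) x) y = inner x ((bpow A (Suc k)) y)" by simp
  qed
qed

lemma sqrt_construct:
  fixes T :: "'a::{real_inner,complete_space} \<Rightarrow> 'a"
  assumes T: "posop T"
  shows "\<exists>S. posop S \<and> (\<forall>y. S (S y) = T y) \<and> (\<forall>y. S y \<in> closure (range T)) \<and>
     (\<forall>F. bounded_linear F \<longrightarrow> (\<forall>y. F (T y) = T (F y)) \<longrightarrow> (\<forall>y. F (S y) = S (F y)))"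
proof -
  have blT: "bounded_linear T" by (rule posopD(1)[OF T])
  interpret Tl: bounded_linear T by (rule blT)
  obtain c where c: "c > 0" "\<And>x. norm (T x) \<le> norm x * c"
    using Tl.pos_bounded by blast
  have Tle: "inner y (T y) \<le> c * (norm y)^2" for y
  proof -
    have "inner y (T y) \<le> norm y * norm (T y)" by (rule norm_cauchy_schwarz)
    also have "\<dots> \<le> norm y * (norm y * c)" by (intro mult_left_mono c) simp
    finally show ?thesis by (simp add: power2_eq_square algebra_simps)
  qed
  define Af where "Af = (\<lambda>y. y - (1/c) *\<^sub>R T y)"
  have blA: "bounded_linear Af" unfolding Af_def
    by (intro bounded_linear_sub bounded_linear_ident bounded_linear_compose[OF bounded_linear_scaleR_right blT])
  have posA: "posop Af" unfolding posop_def selfadj_def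
  proof (intro conjI allI blA)
    fix x y show "inner (Af x) y = inner x (Af y)"
      unfolding Af_def by (simp add: inner_diff_left inner_diff_right posopD(2)[OF T])
  next
    fix x
    have "inner x (Af x) = (norm x)^2 - (1/c) * inner x (T x)"
      unfolding Af_def by (simp add: inner_diff_right power2_norm_eq_inner)
    also have "\<dots> \<ge> (norm x)^2 - (1/c) * (c * (norm x)^2)"
      using Tle[of x] c by (intro diff_left_mono mult_left_mono) auto
    finally show "0 \<le> inner x (Af x)" using c by simp
  qed
  have Ale: "inner y (Af y) \<le> 1 * (norm y)^2" for y
  proof -
    have "inner y (Af y) = (norm y)^2 - (1/c) * inner y (T y)"
      unfolding Af_def by (simp add: inner_diff_right power2_norm_eq_inner)
    also have "\<dots> \<le> (norm y)^2" using posopD(3)[OF T, of y] c by simp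
    finally show ?thesis by simp
  qed
  have Anorm: "norm (Af y) \<le> 1 * norm y" for y
    by (rule posop_norm[OF posA _ Ale]) simp
  define A where "A = Blinfun Af"
  have Aap: "blinfun_apply A = Af" unfolding A_def by (rule bounded_linear_Blinfun_apply[OF blA])
  have nA: "norm A \<le> 1"
    by (rule norm_blinfun_bound) (use Anorm in \<open>auto simp: Aap\<close>)
  have Asa: "selfadj (blinfun_apply A)" using posA by (simp add: posop_def Aap)
  define S0 where "S0 y = (\<Sum>k. cf k *\<^sub>R bpow A k y)" for y
  define C where "C = (\<Sum>k. \<bar>cf k\<bar>)"
  have bpn: "norm (bpow A k y) \<le> norm y" for k y
  proof -
    have "norm (bpow A k y) \<le> norm (bpow A k) * norm y" by (rule norm_blinfun)
    also have "\<dots> \<le> 1 * norm y" by (intro mult_right_mono bpow_norm nA) auto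
    finally show ?thesis by simp
  qed
  have suma: "summable (\<lambda>k. norm (cf k *\<^sub>R bpow A k))"
  proof (rule summable_comparison_test'[OF summable_abs_cf])
    fix k :: nat
    have "norm (norm (cf k *\<^sub>R bpow A k)) = \<bar>cf k\<bar> * norm (bpow A k)" by simp
    also have "\<dots> \<le> \<bar>cf k\<bar> * 1" by (intro mult_left_mono bpow_norm nA) simp
    finally show "norm (norm (cf k *\<^sub>R bpow A k)) \<le> \<bar>cf k\<bar>" by simp
  qed
  have sumny: "summable (\<lambda>k. norm (cf k *\<^sub>R bpow A k y))" for y
  proof (rule summable_comparison_test'[OF summable_mult2[OF summable_abs_cf, of "norm y"]])
    fix k :: nat
    have "norm (norm (cf k *\<^sub>R bpow A k y)) = \<bar>cf k\<bar> * norm (bpow A k y)" by simp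
    also have "\<dots> \<le> \<bar>cf k\<bar> * norm y" by (intro mult_left_mono bpn) simp
    finally show "norm (norm (cf k *\<^sub>R bpow A k y)) \<le> \<bar>cf k\<bar> * norm y" .
  qed
  have sumy: "summable (\<lambda>k. cf k *\<^sub>R bpow A k y)" for y
    by (rule summable_norm_cancel_cs[OF sumny])
  have psum_le: "norm (\<Sum>k<n. cf k *\<^sub>R bpow A k y) \<le> C * norm y" for n y
  proof -
    have "norm (\<Sum>k<n. cf k *\<^sub>R bpow A k y) \<le> (\<Sum>k<n. norm (cf k *\<^sub>R bpow A k y))"
      by (rule norm_sum)
    also have "\<dots> \<le> (\<Sum>k<n. \<bar>cf k\<bar> * norm y)"
      by (intro sum_mono) (simp add: bpn mult_left_mono)
    also have "\<dots> = (\<Sum>k<n. \<bar>cf k\<bar>) * norm y" by (simp add: sum_distrib_right)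
    also have "\<dots> \<le> C * norm y" unfolding C_def
      by (intro mult_right_mono sum_le_suminf summable_abs_cf) auto
    finally show ?thesis .
  qed
  have S0lim: "(\<lambda>n. \<Sum>k<n. cf k *\<^sub>R bpow A k y) \<longlonglongrightarrow> S0 y" for y
    unfolding S0_def by (rule summable_LIMSEQ[OF sumy])
  have S0le: "norm (S0 y) \<le> C * norm y" for y
    by (rule Lim_norm_ubound[OF _ S0lim]) (auto simp: psum_le)
  have blS0: "bounded_linear S0"
  proof (rule bounded_linear_intro[where K=C])
    fix x y show "S0 (x + y) = S0 x + S0 y"
      unfolding S0_def by (simp add: blinfun.add_right scaleR_add_right suminf_add[OF sumy sumy])
  next
    fix r x show "S0 (r *\<^sub>R x) = r *\<^sub>R S0 x"
    proof -
      have "\<And>k. cf k *\<^sub>R bpow A k (r *\<^sub>R x) = r *\<^sub>R (cf k *\<^sub>R bpow A k x)"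
        unfolding blinfun.scaleR_right by (rule scaleR_left_commute)
      thus ?thesis unfolding S0_def by (simp only: suminf_scaleR_right[OF sumy])
    qed
  next
    fix x show "norm (S0 x) \<le> norm x * C" by (subst mult.commute) (rule S0le)
  qed
  have inS0: "inner (S0 x) y = (\<Sum>k. cf k * inner x (bpow A k y))" for x y
  proof -
    have "inner (S0 x) y = (\<Sum>k. inner (cf k *\<^sub>R bpow A k x) y)"
      unfolding S0_def by (rule bounded_linear.suminf[OF bounded_linear_inner_left sumy])
    also have "\<dots> = (\<Sum>k. cf k * inner x (bpow A k y))"
      using bpow_selfadj[OF Asa] by (simp add: selfadj_def)
    finally show ?thesis .
  qed
  have inS0': "inner x (S0 y) = (\<Sum>k. cf k * inner x (bpow A k y))" for x y
    unfolding S0_def by (subst bounded_linear.suminf[OF bounded_linear_inner_right sumy]) simp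
  have S0sa: "selfadj S0" unfolding selfadj_def using inS0 inS0' by simp
  have S0pos: "0 \<le> inner x (S0 x)" for x
  proof -
    have s1: "summable (\<lambda>k. cf k * inner x (bpow A k x))"
      using bounded_linear.summable[OF bounded_linear_inner_right sumy, of x x] by simp
    have s2: "(\<lambda>k. cf k * (norm x)^2) sums (0 * (norm x)^2)"
      by (rule sums_mult2[OF cf_sums])
    have "0 = (\<Sum>k. cf k * (norm x)^2)" using sums_unique[OF s2] by simp
    also have "\<dots> \<le> (\<Sum>k. cf k * inner x (bpow A k x))"
    proof (rule suminf_le[OF _ sums_summable[OF s2] s1])
      fix k show "cf k * (norm x)^2 \<le> cf k * inner x (bpow A k x)"
      proof (cases k)
        case 0 thus ?thesis by (simp add: power2_norm_eq_inner)
      next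
        case (Suc k')
        have "inner x (bpow A k x) \<le> norm x * norm (bpow A k x)" by (rule norm_cauchy_schwarz)
        also have "\<dots> \<le> norm x * norm x"
          by (intro mult_left_mono bpn) simp
        finally have "inner x (bpow A k x) \<le> (norm x)^2" by (simp add: power2_eq_square)
        thus ?thesis using cf_Suc_nonpos[of k'] Suc by (intro mult_left_mono_neg) auto
      qed
    qed
    finally show ?thesis using inS0' by simp
  qed
  have S0sq: "S0 (S0 y) = y - Af y" for y
  proof -
    let ?a = "\<lambda>k. cf k *\<^sub>R bpow A k" and ?b = "\<lambda>k. cf k *\<^sub>R bpow A k y"
    have Pap: "blinfun_apply (\<Sum>k<n. ?a k) z = (\<Sum>k<n. cf k *\<^sub>R bpow A k z)" for n z
      by (simp add: blinfun.sum_left blinfun.scaleR_left)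
    have lim: "(\<lambda>n. blinfun_apply (\<Sum>k<n. ?a k) (\<Sum>k<n. ?b k)) \<longlonglongrightarrow> S0 (S0 y)"
    proof -
      have e: "blinfun_apply (\<Sum>k<n. ?a k) (\<Sum>k<n. ?b k) =
          blinfun_apply (\<Sum>k<n. ?a k) ((\<Sum>k<n. ?b k) - S0 y) + (\<Sum>k<n. cf k *\<^sub>R bpow A k (S0 y))" for n
        by (simp add: blinfun.diff_right Pap)
      have z: "(\<lambda>n. blinfun_apply (\<Sum>k<n. ?a k) ((\<Sum>k<n. ?b k) - S0 y)) \<longlonglongrightarrow> 0"
      proof (rule Lim_null_comparison)
        show "\<forall>\<^sub>F n in sequentially. norm (blinfun_apply (\<Sum>k<n. ?a k) ((\<Sum>k<n. ?b k) - S0 y))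
            \<le> C * norm ((\<Sum>k<n. ?b k) - S0 y)"
          by (intro always_eventually allI) (simp only: Pap psum_le)
        have "(\<lambda>n. (\<Sum>k<n. ?b k) - S0 y) \<longlonglongrightarrow> 0" by (rule LIM_zero[OF S0lim])
        hence "(\<lambda>n. norm ((\<Sum>k<n. ?b k) - S0 y)) \<longlonglongrightarrow> 0" by (rule tendsto_norm_zero)
        thus "(\<lambda>n. C * norm ((\<Sum>k<n. ?b k) - S0 y)) \<longlonglongrightarrow> 0" by (rule tendsto_mult_right_zero)
      qed
      show ?thesis unfolding e using tendsto_add[OF z S0lim[of "S0 y"]] by simp
    qed
    have s1: "(\<lambda>n. \<Sum>i\<le>n. blinfun_apply (?a i) (?b (n - i))) sums S0 (S0 y)"
      by (rule bilinear_Cauchy_product_sums[OF bounded_bilinear_blinfun_apply suma sumny lim])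
    have eq: "(\<lambda>n. \<Sum>i\<le>n. blinfun_apply (?a i) (?b (n - i)))
        = (\<lambda>n. (\<Sum>i\<le>n. cf i * cf (n - i)) *\<^sub>R bpow A n y)"
    proof
      fix n
      have "(\<Sum>i\<le>n. blinfun_apply (?a i) (?b (n - i))) = (\<Sum>i\<le>n. (cf i * cf (n - i)) *\<^sub>R bpow A n y)"
      proof (rule sum.cong[OF refl])
        fix i assume "i \<in> {..n}"
        hence "bpow A n = bpow A i o\<^sub>L bpow A (n - i)" using bpow_add[of A i "n - i"] by simp
        thus "blinfun_apply (?a i) (?b (n - i)) = (cf i * cf (n - i)) *\<^sub>R bpow A n y"
          by (simp add: blinfun.scaleR_left blinfun.scaleR_right)
      qed
      thus "(\<Sum>i\<le>n. blinfun_apply (?a i) (?b (n - i))) = (\<Sum>i\<le>n. cf i * cf (n - i)) *\<^sub>R bpow A n y"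
        by (simp add: scaleR_sum_left)
    qed
    have s3: "(\<lambda>n. (\<Sum>i\<le>n. cf i * cf (n - i)) *\<^sub>R bpow A n y) sums
        (\<Sum>n\<in>{0,1}. (\<Sum>i\<le>n. cf i * cf (n - i)) *\<^sub>R bpow A n y)"
      by (rule sums_finite) (auto simp: cf_cauchy)
    have s2: "(\<lambda>n. (\<Sum>i\<le>n. cf i * cf (n - i)) *\<^sub>R bpow A n y) sums S0 (S0 y)"
      using s1 unfolding eq .
    have "S0 (S0 y) = (\<Sum>n\<in>{0,1}. (\<Sum>i\<le>n. cf i * cf (n - i)) *\<^sub>R bpow A n y)"
      by (rule sums_unique2[OF s2 s3])
    also have "\<dots> = y - Af y" by (simp add: cf_cauchy Aap)
    finally show ?thesis .
  qed
  have bprange: "\<exists>u. bpow A k y - y = T u" for k y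
  proof (induction k)
    case 0 show ?case by (rule exI[of _ 0]) simp
  next
    case (Suc k)
    then obtain u where u: "bpow A k y - y = T u" by blast
    have "bpow A (Suc k) y - y = (bpow A k y - y) - (1/c) *\<^sub>R T (bpow A k y)"
      by (simp add: Aap Af_def)
    also have "\<dots> = T (u - (1/c) *\<^sub>R bpow A k y)" by (simp add: u Tl.diff Tl.scaleR)
    finally show ?case by blast
  qed
  define r where "r y n = (\<Sum>k<n. cf k *\<^sub>R (bpow A k y - y))" for y n
  have rrange: "\<exists>u. r y n = T u" for y n
  proof (induction n)
    case 0 show ?case by (rule exI[of _ 0]) (simp add: r_def)
  next
    case (Suc n)
    then obtain u where u: "r y n = T u" by blast
    obtain v where v: "bpow A n y - y = T v" using bprange by blast
    have "r y (Suc n) = T u + cf n *\<^sub>R T v" by (simp add: r_def u[unfolded r_def] v)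
    also have "\<dots> = T (u + cf n *\<^sub>R v)" by (simp add: Tl.add Tl.scaleR)
    finally show ?case by blast
  qed
  have rlim: "r y \<longlonglongrightarrow> S0 y" for y
  proof -
    have r_eq: "r y n = (\<Sum>k<n. cf k *\<^sub>R bpow A k y) - (\<Sum>k<n. cf k) *\<^sub>R y" for n
      by (simp add: r_def scaleR_diff_right sum_subtractf scaleR_sum_left)
    have "(\<lambda>n. \<Sum>k<n. cf k) \<longlonglongrightarrow> 0" using cf_sums by (simp add: sums_def)
    hence "(\<lambda>n. (\<Sum>k<n. cf k) *\<^sub>R y) \<longlonglongrightarrow> 0 *\<^sub>R y" by (intro tendsto_scaleR tendsto_const)
    from tendsto_diff[OF S0lim[of y] this] show ?thesis by (simp add: r_eq[abs_def])
  qed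
  interpret S0l: bounded_linear S0 by (rule blS0)
  have S0lin: "S0 (a *\<^sub>R z) = a *\<^sub>R S0 z" for a z by (rule S0l.scaleR)
  define S where "S y = sqrt c *\<^sub>R S0 y" for y
  have h1: "posop S" unfolding posop_def selfadj_def
  proof (intro conjI allI)
    show "bounded_linear S" unfolding S_def[abs_def]
      by (rule bounded_linear_compose[OF bounded_linear_scaleR_right blS0])
    fix x y show "inner (S x) y = inner x (S y)" using S0sa by (simp add: S_def selfadj_def)
  next
    fix x show "0 \<le> inner x (S x)" using S0pos[of x] c by (simp add: S_def)
  qed
  have h2: "\<forall>y. S (S y) = T y"
  proof
    fix y
    have "S (S y) = c *\<^sub>R S0 (S0 y)" using c by (simp add: S_def S0lin)
    also have "\<dots> = T y" using c by (simp add: S0sq Af_def)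
    finally show "S (S y) = T y" .
  qed
  have h3: "\<forall>y. S y \<in> closure (range T)"
  proof
    fix y
    have lim: "(\<lambda>n. sqrt c *\<^sub>R r y n) \<longlonglongrightarrow> S y" unfolding S_def
      by (intro tendsto_scaleR tendsto_const rlim)
    have mem: "\<forall>n. sqrt c *\<^sub>R r y n \<in> range T"
    proof
      fix n obtain u where "r y n = T u" using rrange by blast
      hence "sqrt c *\<^sub>R r y n = T (sqrt c *\<^sub>R u)" by (simp add: Tl.scaleR)
      thus "sqrt c *\<^sub>R r y n \<in> range T" by (rule ssubst) (rule rangeI)
    qed
    show "S y \<in> closure (range T)" unfolding closure_sequential
      by (rule exI[of _ "\<lambda>n. sqrt c *\<^sub>R r y n"]) (simp only: lim mem simp_thms)
  qed
  have h4: "\<forall>F. bounded_linear F \<longrightarrow> (\<forall>y. F (T y) = T (F y)) \<longrightarrow> (\<forall>y. F (S y) = S (F y))"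
  proof (intro allI impI)
    fix F y assume F: "bounded_linear F" and FT: "\<forall>y. F (T y) = T (F y)"
    interpret Fl: bounded_linear F by (rule F)
    have FA: "F (blinfun_apply A z) = blinfun_apply A (F z)" for z
      by (simp add: Aap Af_def Fl.diff Fl.scaleR FT)
    have "F (S0 y) = (\<Sum>k. F (cf k *\<^sub>R bpow A k y))"
      unfolding S0_def by (rule Fl.suminf[OF sumy])
    also have "\<dots> = (\<Sum>k. cf k *\<^sub>R bpow A k (F y))"
      by (simp add: Fl.scaleR bpow_comm[of F A, OF FA])
    also have "\<dots> = S0 (F y)" by (simp add: S0_def)
    finally show "F (S y) = S (F y)" by (simp add: S_def Fl.scaleR)
  qed
  show ?thesis by (intro exI[of _ S] conjI h1 h2 h3 h4)
qed

lemma sqrt_unique: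
  fixes T S S' :: "'a::real_inner \<Rightarrow> 'a"
  assumes S: "posop S" and S': "posop S'" and SS: "\<And>y. S (S y) = T y" and SS': "\<And>y. S' (S' y) = T y"
    and comm: "\<And>y. S' (S y) = S (S' y)"
  shows "S' = S"
proof
  fix y
  interpret Sl: bounded_linear S using posopD(1)[OF S] .
  interpret S'l: bounded_linear S' using posopD(1)[OF S'] .
  define z where "z = S y - S' y"
  have sum0: "S z + S' z = 0"
    unfolding z_def by (simp add: Sl.diff S'l.diff SS SS' comm)
  have "inner z (S z) + inner z (S' z) = inner z (S z + S' z)" by (simp add: inner_add_right)
  also have "\<dots> = 0" by (simp add: sum0)
  finally have e: "inner z (S z) + inner z (S' z) = 0" .
  have p1: "0 \<le> inner z (S z)" and p2: "0 \<le> inner z (S' z)" using posopD(3)[OF S] posopD(3)[OF S'] by auto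
  have "inner z (S z) = 0" using e p1 p2 by linarith
  hence Sz: "S z = 0" by (rule posop_zero[OF S])
  have "inner z (S' z) = 0" using e p1 p2 by linarith
  hence S'z: "S' z = 0" by (rule posop_zero[OF S'])
  have "inner z z = inner (S y) z - inner (S' y) z" unfolding z_def by (simp add: inner_diff_left)
  also have "\<dots> = inner y (S z) - inner y (S' z)" using posopD(2)[OF S] posopD(2)[OF S'] by simp
  also have "\<dots> = 0" by (simp add: Sz S'z)
  finally have "z = 0" by simp
  thus "S' y = S y" unfolding z_def by simp
qed

lemma op_sqrt_props:
  fixes T :: "'a::{real_inner,complete_space} \<Rightarrow> 'a"
  assumes T: "posop T"
  shows "posop (op_sqrt T)" "\<And>y. op_sqrt T (op_sqrt T y) = T y" "\<And>y. op_sqrt T y \<in> closure (range T)"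
proof -
  obtain S where S: "posop S" "\<forall>y. S (S y) = T y" "\<forall>y. S y \<in> closure (range T)"
    and comm: "\<forall>F. bounded_linear F \<longrightarrow> (\<forall>y. F (T y) = T (F y)) \<longrightarrow> (\<forall>y. F (S y) = S (F y))"
    using sqrt_construct[OF T] by blast
  have "op_sqrt T = S" unfolding op_sqrt_def
  proof (rule the_equality)
    show "bounded_linear S \<and> (\<forall>x y. inner (S x) y = inner x (S y)) \<and> (\<forall>x. 0 \<le> inner x (S x)) \<and> S \<circ> S = T"
      using S by (auto simp: posop_def selfadj_def)
  next
    fix S' assume h: "bounded_linear S' \<and> (\<forall>x y. inner (S' x) y = inner x (S' y)) \<and> (\<forall>x. 0 \<le> inner x (S' x)) \<and> S' \<circ> S' = T"
    hence S': "posop S'" by (simp add: posop_def selfadj_def)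
    have SS': "\<And>y. S' (S' y) = T y" using h by (auto simp: fun_eq_iff)
    have "\<forall>y. S' (T y) = T (S' y)" using SS' by metis
    hence "\<forall>y. S' (S y) = S (S' y)" using comm h by blast
    thus "S' = S" using sqrt_unique[OF S(1) S'] S(2) SS' by blast
  qed
  thus "posop (op_sqrt T)" "\<And>y. op_sqrt T (op_sqrt T y) = T y" "\<And>y. op_sqrt T y \<in> closure (range T)"
    using S by auto
qed

locale wr =
  fixes R0 :: "'a::{real_inner,complete_space} \<Rightarrow> 'a" and P :: "nat \<Rightarrow> 'a \<Rightarrow> 'a" and m :: nat
  assumes R0: "posop R0"
    and Pb: "\<And>j. j \<in> {1..m} \<Longrightarrow> bounded_linear (P j)"
    and Ps: "\<And>j x y. j \<in> {1..m} \<Longrightarrow> inner (P j x) y = inner x (P j y)"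
    and Pi: "\<And>j x. j \<in> {1..m} \<Longrightarrow> P j (P j x) = P j x"
    and split: "\<And>v. v \<in> closure (range (op_sqrt R0)) \<Longrightarrow> (\<Sum>j=1..m. P j v) = v"
begin

definition "H0 = closure (range (op_sqrt R0))"
definition "B = onorm R0"

lemma B_nonneg: "B \<ge> 0" unfolding B_def by (rule onorm_pos_le[OF posopD(1)[OF R0]])

lemma B_bound: "norm (R0 y) \<le> B * norm y"
  unfolding B_def using onorm[OF posopD(1)[OF R0]] by simp

lemma Q_facts:
  assumes j: "j \<in> {1..m}"
  shows "bounded_linear (\<lambda>y. y - P j y)"
    "\<And>x y. inner (x - P j x) y = inner x (y - P j y)"
    "\<And>u. inner u (u - P j u) = inner (u - P j u) (u - P j u)"
    "\<And>u. inner u (P j u) = inner (P j u) (P j u)"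
    "\<And>u. inner u (u - P j u) \<le> inner u u"
proof -
  interpret Pl: bounded_linear "P j" using Pb[OF j] .
  show "bounded_linear (\<lambda>y. y - P j y)" by (intro bounded_linear_sub bounded_linear_ident Pb[OF j])
  show "\<And>x y. inner (x - P j x) y = inner x (y - P j y)"
    by (simp add: inner_diff_left inner_diff_right Ps[OF j])
  show Pu: "\<And>u. inner u (P j u) = inner (P j u) (P j u)"
    using Ps[OF j] Pi[OF j] by metis
  show "\<And>u. inner u (u - P j u) = inner (u - P j u) (u - P j u)"
    by (simp add: inner_diff_left inner_diff_right Pu inner_commute)
  show "\<And>u. inner u (u - P j u) \<le> inner u u"
    by (simp add: inner_diff_right Pu)
qed

lemma inv_rev:
  assumes "set w \<subseteq> {1..m}"
  shows "posop (Rrev P R0 w) \<and> (\<forall>y. op_sqrt (Rrev P R0 w) y \<in> H0) \<and> (\<forall>y. norm (Rrev P R0 w y) \<le> B * norm y)"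
  using assms
proof (induction w)
  case Nil
  show ?case using R0 B_bound by (auto simp: H0_def intro: closure_subset[THEN subsetD])
next
  case (Cons j w)
  hence j: "j \<in> {1..m}" and IH: "posop (Rrev P R0 w)" "\<forall>y. op_sqrt (Rrev P R0 w) y \<in> H0"
      "\<forall>y. norm (Rrev P R0 w y) \<le> B * norm y" by auto
  define R where "R = Rrev P R0 w"
  define S where "S = op_sqrt R"
  have Spos: "posop S" and SS: "\<And>y. S (S y) = R y" using op_sqrt_props[OF IH(1)] by (auto simp: S_def R_def)
  note Sfacts = posopD[OF Spos]
  note Q = Q_facts[OF j]
  have R': "Rrev P R0 (j # w) = (\<lambda>y. S (S y - P j (S y)))" by (simp add: S_def R_def fun_eq_iff)
  have inn: "inner x (S (S y - P j (S y))) = inner (S x) (S y - P j (S y))" for x y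
    using Sfacts(2) by (metis inner_commute)
  have pos': "posop (\<lambda>y. S (S y - P j (S y)))" unfolding posop_def selfadj_def
  proof (intro conjI allI)
    show "bounded_linear (\<lambda>y. S (S y - P j (S y)))"
      using bounded_linear_compose[OF Sfacts(1) bounded_linear_compose[OF Q(1) Sfacts(1)]] by simp
    fix x y show "inner (S (S x - P j (S x))) y = inner x (S (S y - P j (S y)))"
      using Sfacts(2) Q(2) by metis
  next
    fix x show "0 \<le> inner x (S (S x - P j (S x)))" unfolding inn Q(3) by simp
  qed
  have range': "op_sqrt (\<lambda>y. S (S y - P j (S y))) y \<in> H0" for y
  proof -
    have "op_sqrt (\<lambda>y. S (S y - P j (S y))) y \<in> closure (range (\<lambda>y. S (S y - P j (S y))))"
      using op_sqrt_props(3)[OF pos'] .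
    also have "\<dots> \<subseteq> closure H0"
      by (rule closure_mono) (use IH(2) in \<open>auto simp: S_def R_def\<close>)
    also have "\<dots> = H0" by (simp add: H0_def)
    finally show ?thesis .
  qed
  have norm': "norm (S (S y - P j (S y))) \<le> B * norm y" for y
  proof (rule posop_norm[OF pos' B_nonneg])
    fix y
    have "inner y (S (S y - P j (S y))) \<le> inner (S y) (S y)" unfolding inn by (rule Q(5))
    also have "\<dots> = inner y (R y)" using Sfacts(2) SS by metis
    also have "\<dots> \<le> norm y * norm (R y)" by (rule norm_cauchy_schwarz)
    also have "\<dots> \<le> norm y * (B * norm y)" using IH(3) by (intro mult_left_mono) (auto simp: R_def)
    finally show "inner y (S (S y - P j (S y))) \<le> B * (norm y)^2" by (simp add: power2_eq_square algebra_simps)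
  qed
  show ?case unfolding R' using pos' range' norm' by blast
qed

end

context wr
begin

definition "Mw x w = inner x (Rw P R0 w x)"
definition "aw x w j = inner x (Dw P R0 w j x)"

lemma inv_w:
  assumes "set w \<subseteq> {1..m}"
  shows "posop (Rw P R0 w)" "\<And>y. op_sqrt (Rw P R0 w) y \<in> H0" "\<And>y. norm (Rw P R0 w y) \<le> B * norm y"
  using inv_rev[of "rev w"] assms by (auto simp: Rw_def)

lemma word_facts:
  assumes w: "set w \<subseteq> {1..m}"
  shows "Mw x w \<ge> 0"
    "\<And>j. j \<in> {1..m} \<Longrightarrow> aw x w j \<ge> 0"
    "\<And>j. j \<in> {1..m} \<Longrightarrow> Mw x (w @ [j]) = Mw x w - aw x w j"
    "(\<Sum>j=1..m. aw x w j) = Mw x w"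
    "(norm (Rw P R0 w x))^2 \<le> B * Mw x w"
proof -
  define R where "R = Rw P R0 w"
  define S where "S = op_sqrt R"
  have Rpos: "posop R" using inv_w(1)[OF w] by (simp add: R_def)
  have Spos: "posop S" and SS: "\<And>y. S (S y) = R y" using op_sqrt_props[OF Rpos] by (auto simp: S_def)
  note Sf = posopD[OF Spos]
  have SH: "S y \<in> H0" for y using inv_w(2)[OF w] by (simp add: S_def R_def)
  have MS: "Mw x w = inner (S x) (S x)" unfolding Mw_def R_def[symmetric] SS[symmetric] using Sf(2) by metis
  show "Mw x w \<ge> 0" unfolding MS by simp
  have aS: "aw x w j = inner (S x) (P j (S x))" for j
    unfolding aw_def Dw_def R_def[symmetric] S_def[symmetric] using Sf(2)[of x "P j (S x)"]
    by (simp add: inner_commute)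
  show "\<And>j. j \<in> {1..m} \<Longrightarrow> aw x w j \<ge> 0" unfolding aS by (simp add: Q_facts(4))
  show "\<And>j. j \<in> {1..m} \<Longrightarrow> Mw x (w @ [j]) = Mw x w - aw x w j"
  proof -
    fix j assume j: "j \<in> {1..m}"
    have "Rw P R0 (w @ [j]) = (\<lambda>y. S (S y - P j (S y)))"
      by (simp add: Rw_def S_def R_def fun_eq_iff)
    hence "Mw x (w @ [j]) = inner (S x) (S x - P j (S x))"
      unfolding Mw_def using Sf(2)[of x "S x - P j (S x)"] by (simp add: inner_commute)
    thus "Mw x (w @ [j]) = Mw x w - aw x w j" unfolding MS aS by (simp add: inner_diff_right)
  qed
  show "(\<Sum>j=1..m. aw x w j) = Mw x w"
    unfolding aS MS using split[of "S x"] SH[of x]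
    by (simp add: inner_sum_right[symmetric] H0_def)
  have "(norm (R x))^2 = (norm (S (S x)))^2" by (simp add: SS)
  also have "\<dots> = inner (S x) (S (S (S x)))"
    using Sf(2) by (simp add: power2_norm_eq_inner)
  also have "\<dots> = inner (S x) (R (S x))" by (simp only: SS[of "S x"])
  also have "\<dots> \<le> norm (S x) * norm (R (S x))" by (rule norm_cauchy_schwarz)
  also have "\<dots> \<le> norm (S x) * (B * norm (S x))"
    using inv_w(3)[OF w] by (intro mult_left_mono) (auto simp: R_def)
  also have "\<dots> = B * Mw x w" unfolding MS by (simp add: power2_norm_eq_inner[symmetric] power2_eq_square)
  finally show "(norm (Rw P R0 w x))^2 \<le> B * Mw x w" by (simp add: R_def)
qed

end

context wr
begin

lemma pc_facts:
  assumes w: "set w \<subseteq> {1..m}" and q0: "\<forall>j\<in>{1..m}. q j \<ge> 0" and q1: "(\<Sum>j=1..m. q j) = 1"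
    and m: "m \<ge> 1"
  shows "\<And>j. j \<in> {1..m} \<Longrightarrow> pcond P R0 m q x w j \<ge> 0"
    "(\<Sum>j=1..m. pcond P R0 m q x w j) = 1"
    "(\<Sum>j=1..m. pcond P R0 m q x w j * Mw x (w @ [j])) \<le> (1 - 1 / real m) * Mw x w"
proof -
  note F = word_facts[OF w, where x=x]
  have F4: "sum (aw x w) {1..m} = Mw x w" "sum (aw x w) {Suc 0..m} = Mw x w" using F(4) by simp_all
  have s: "(\<Sum>k=1..m. inner x (Dw P R0 w k x)) = Mw x w" using F(4) by (simp add: aw_def)
  have pc: "pcond P R0 m q x w j = (if Mw x w > 0 then aw x w j / Mw x w else q j)" for j
    unfolding pcond_def Let_def s by (simp add: aw_def)
  show "\<And>j. j \<in> {1..m} \<Longrightarrow> pcond P R0 m q x w j \<ge> 0"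
    using F(2) q0 by (auto simp: pc)
  show "(\<Sum>j=1..m. pcond P R0 m q x w j) = 1"
  proof (cases "Mw x w > 0")
    case True thus ?thesis using F(4) by (simp add: pc sum_divide_distrib[symmetric])
  next
    case False thus ?thesis using q1 by (simp add: pc)
  qed
  show "(\<Sum>j=1..m. pcond P R0 m q x w j * Mw x (w @ [j])) \<le> (1 - 1 / real m) * Mw x w"
  proof (cases "Mw x w > 0")
    case True
    define s where "s = Mw x w"
    have sp: "s > 0" using True by (simp add: s_def)
    have "(\<Sum>j=1..m. pcond P R0 m q x w j * Mw x (w @ [j])) = (\<Sum>j=1..m. aw x w j / s * (s - aw x w j))"
      by (intro sum.cong) (auto simp: pc True F(3) s_def)
    also have "\<dots> = (\<Sum>j=1..m. aw x w j) - (\<Sum>j=1..m. (aw x w j)^2) / s"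
    proof -
      have "\<And>j. aw x w j / s * (s - aw x w j) = aw x w j - (aw x w j)^2 / s"
        using sp by (simp add: field_simps power2_eq_square)
      thus ?thesis by (simp add: sum_subtractf sum_divide_distrib)
    qed
    also have "\<dots> \<le> s - (s^2 / real m) / s"
    proof -
      have "(\<Sum>j=1..m. aw x w j)^2 \<le> (\<Sum>j=1..m. (aw x w j)^2) * card {1..m}"
        by (rule sum_squared_le_sum_of_squares)
      hence "s^2 / real m \<le> (\<Sum>j=1..m. (aw x w j)^2)" using m by (simp add: F4 s_def divide_le_eq)
      hence "(s^2 / real m) / s \<le> (\<Sum>j=1..m. (aw x w j)^2) / s" using sp by (intro divide_right_mono) auto
      thus ?thesis by (simp add: F4 s_def)
    qed
    also have "\<dots> = (1 - 1 / real m) * s" using sp m by (simp add: field_simps power2_eq_square)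
    finally show ?thesis by (simp add: s_def)
  next
    case False
    hence M0: "Mw x w = 0" using F(1) by simp
    have "\<forall>j\<in>{1..m}. aw x w j = 0"
      using F(4) F(2) M0 by (subst sum_nonneg_eq_0_iff[symmetric]) auto
    hence "\<forall>j\<in>{1..m}. Mw x (w @ [j]) = 0" using F(3) M0 by simp
    thus ?thesis using M0 by simp
  qed
qed

definition "piw q x w = (\<Prod>i<length w. pcond P R0 m q x (take i w) (w ! i))"
definition "Wn n = {w. set w \<subseteq> {1..m} \<and> length w = n}"

lemma finite_Wn: "finite (Wn n)"
  unfolding Wn_def by (rule finite_lists_length_eq) simp

lemma Wn_Suc: "Wn (Suc n) = (\<lambda>(w,j). w @ [j]) ` (Wn n \<times> {1..m})"
proof (intro set_eqI iffI)
  fix v assume "v \<in> Wn (Suc n)"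
  hence v: "set v \<subseteq> {1..m}" "length v = Suc n" by (auto simp: Wn_def)
  then obtain w j where "v = w @ [j]" by (metis length_Suc_conv_rev)
  thus "v \<in> (\<lambda>(w,j). w @ [j]) ` (Wn n \<times> {1..m})" using v by (auto simp: Wn_def)
qed (auto simp: Wn_def)

lemma piw_snoc: "piw q x (w @ [j]) = piw q x w * pcond P R0 m q x w j"
  unfolding piw_def by (auto simp: lessThan_Suc nth_append intro!: prod.cong)

lemma piw_nonneg:
  assumes "set w \<subseteq> {1..m}" "\<forall>j\<in>{1..m}. q j \<ge> 0" "(\<Sum>j=1..m. q j) = 1" "m \<ge> 1"
  shows "piw q x w \<ge> 0"
  unfolding piw_def
proof (rule prod_nonneg)
  fix i assume "i \<in> {..<length w}"
  hence "w ! i \<in> set w" by simp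
  hence "set (take i w) \<subseteq> {1..m}" "w ! i \<in> {1..m}" using assms(1)
    by (auto dest: in_set_takeD)
  thus "0 \<le> pcond P R0 m q x (take i w) (w ! i)" using pc_facts(1)[OF _ assms(2-4)] by blast
qed

definition "Exw q x n = (\<Sum>w\<in>Wn n. piw q x w * Mw x w)"

lemma Exw_bound:
  assumes q0: "\<forall>j\<in>{1..m}. q j \<ge> 0" and q1: "(\<Sum>j=1..m. q j) = 1" and m: "m \<ge> 1"
  shows "Exw q x n \<le> (1 - 1 / real m) ^ n * inner x (R0 x)"
proof (induction n)
  case 0
  have "Wn 0 = {[]}" by (auto simp: Wn_def)
  thus ?case by (simp add: Exw_def piw_def Mw_def Rw_def)
next
  case (Suc n)
  have inj: "inj_on (\<lambda>(w,j). w @ [j]) (Wn n \<times> {1..m})" by (auto simp: inj_on_def)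
  have "Exw q x (Suc n) = (\<Sum>(w,j)\<in>Wn n \<times> {1..m}. piw q x (w @ [j]) * Mw x (w @ [j]))"
    unfolding Exw_def Wn_Suc by (subst sum.reindex[OF inj]) (simp add: case_prod_beta)
  also have "\<dots> = (\<Sum>w\<in>Wn n. \<Sum>j=1..m. piw q x (w @ [j]) * Mw x (w @ [j]))"
    by (rule sum.cartesian_product[symmetric])
  also have "\<dots> = (\<Sum>w\<in>Wn n. piw q x w * (\<Sum>j=1..m. pcond P R0 m q x w j * Mw x (w @ [j])))"
    by (simp add: piw_snoc sum_distrib_left mult.assoc)
  also have "\<dots> \<le> (\<Sum>w\<in>Wn n. piw q x w * ((1 - 1 / real m) * Mw x w))"
  proof (rule sum_mono)
    fix w assume "w \<in> Wn n"
    hence w: "set w \<subseteq> {1..m}" by (simp add: Wn_def)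
    show "piw q x w * (\<Sum>j=1..m. pcond P R0 m q x w j * Mw x (w @ [j])) \<le> piw q x w * ((1 - 1 / real m) * Mw x w)"
      by (rule mult_left_mono[OF pc_facts(3)[OF w q0 q1 m] piw_nonneg[OF w q0 q1 m]])
  qed
  also have "\<dots> = (1 - 1 / real m) * Exw q x n" by (simp add: Exw_def sum_distrib_left mult_ac)
  also have "\<dots> \<le> (1 - 1 / real m) * ((1 - 1 / real m) ^ n * inner x (R0 x))"
    using m by (intro mult_left_mono Suc) (auto simp: field_simps)
  finally show ?case by simp
qed

end

lemma space_Omega: "space (Omega m) = {\<omega>. \<forall>i. \<omega> i \<in> {1..m}}"
  by (auto simp: Omega_def space_PiM PiE_def Pi_def)

lemma prefix_Suc: "prefix \<omega> (Suc n) = prefix \<omega> n @ [\<omega> n]"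
  by (simp add: prefix_def)

lemma length_prefix[simp]: "length (prefix \<omega> n) = n" by (simp add: prefix_def)

lemma nth_prefix: "i < n \<Longrightarrow> prefix \<omega> n ! i = \<omega> i" by (simp add: prefix_def)

lemma cyl_eq:
  "cyl m w = prod_emb UNIV (\<lambda>_. count_space {1..m}) {..<length w} (\<Pi>\<^sub>E i\<in>{..<length w}. {w ! i})"
proof (intro set_eqI iffI)
  fix \<omega> assume "\<omega> \<in> cyl m w"
  hence om: "\<omega> \<in> space (Omega m)" and pw: "prefix \<omega> (length w) = w" by (auto simp: cyl_def)
  have wi: "w ! i = \<omega> i" if "i < length w" for i
    using nth_prefix[OF that, of \<omega>] pw by simp
  have wim: "w ! i \<in> {1..m}" if "i < length w" for i using wi[OF that] om by (simp add: space_Omega)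
  have r: "restrict \<omega> {..<length w} \<in> (\<Pi>\<^sub>E i\<in>{..<length w}. {w ! i})" using wi by (auto simp: PiE_iff)
  have a: "\<forall>i. \<omega> i \<in> {1..m}" using om by (simp add: space_Omega)
  show "\<omega> \<in> prod_emb UNIV (\<lambda>_. count_space {1..m}) {..<length w} (\<Pi>\<^sub>E i\<in>{..<length w}. {w ! i})"
    unfolding prod_emb_iff using r a wim by simp
next
  fix \<omega> assume h: "\<omega> \<in> prod_emb UNIV (\<lambda>_. count_space {1..m}) {..<length w} (\<Pi>\<^sub>E i\<in>{..<length w}. {w ! i})"
  hence "\<omega> \<in> space (Omega m)" by (auto simp: prod_emb_iff space_Omega)
  moreover have "prefix \<omega> (length w) = w"
    using h by (auto simp: prod_emb_iff PiE_iff nth_prefix intro!: nth_equalityI)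
  ultimately show "\<omega> \<in> cyl m w" by (simp add: cyl_def)
qed

lemma prefix_in: "\<omega> \<in> space (Omega m) \<Longrightarrow> set (prefix \<omega> n) \<subseteq> {1..m}"
  by (auto simp: prefix_def space_Omega)

lemma cyl_sets: "cyl m w \<in> sets (Omega m)"
proof (cases "set w \<subseteq> {1..m}")
  case True
  hence "\<And>i. i < length w \<Longrightarrow> w ! i \<in> {1..m}" using nth_mem by blast
  hence "\<forall>i\<in>{..<length w}. {w ! i} \<in> sets (count_space {1..m})" by simp
  thus ?thesis unfolding cyl_eq Omega_def by (intro sets_PiM_I) auto
next
  case False
  have "cyl m w = {}"
  proof (rule ccontr)
    assume "cyl m w \<noteq> {}"
    then obtain \<omega> where "\<omega> \<in> space (Omega m)" "prefix \<omega> (length w) = w" by (auto simp: cyl_def)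
    thus False using prefix_in[of \<omega> m "length w"] False by simp
  qed
  thus ?thesis by simp
qed

lemma cyl_mem: "\<omega> \<in> space (Omega m) \<Longrightarrow> \<omega> \<in> cyl m w \<longleftrightarrow> prefix \<omega> (length w) = w"
  by (simp add: cyl_def)

definition "Wl (m::nat) n = {w. set w \<subseteq> {1..m} \<and> length w = n}"

lemma finite_Wl: "finite (Wl m n)"
  unfolding Wl_def by (rule finite_lists_length_eq) simp

lemma union_cyl:
  assumes "G \<subseteq> Wl m n"
  shows "(\<Union>w\<in>G. cyl m w) = {\<omega> \<in> space (Omega m). prefix \<omega> n \<in> G}"
  using assms by (auto simp: cyl_def Wl_def)

lemma disj_cyl: "disjoint_family_on (cyl m) (Wl m n)"
  by (auto simp: disjoint_family_on_def cyl_def Wl_def)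

lemma emeasure_union_cyl:
  assumes "G \<subseteq> Wl m n" and that: "sets N = sets (Omega m)"
  shows "emeasure N {\<omega> \<in> space (Omega m). prefix \<omega> n \<in> G} = (\<Sum>w\<in>G. emeasure N (cyl m w))"
proof -
  have "(\<Sum>w\<in>G. emeasure N (cyl m w)) = emeasure N (\<Union>w\<in>G. cyl m w)"
    by (rule sum_emeasure) (use assms that finite_Wl cyl_sets disj_cyl in
        \<open>auto intro: finite_subset disjoint_family_on_mono\<close>)
  thus ?thesis using union_cyl[OF assms(1)] by simp
qed

lemma nu_unique:
  assumes N1: "sets N1 = sets (Omega m)" "prob_space N1"
    and N2: "sets N2 = sets (Omega m)" "prob_space N2"
    and eq: "\<And>w. set w \<subseteq> {1..m} \<Longrightarrow> emeasure N1 (cyl m w) = emeasure N2 (cyl m w)"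
  shows "N1 = N2"
proof (rule measure_eqI_PiM_infinite[where I=UNIV and M="\<lambda>_. count_space {1..m}"])
  show "sets N1 = sets (Pi\<^sub>M UNIV (\<lambda>_. count_space {1..m}))" "sets N2 = sets (Pi\<^sub>M UNIV (\<lambda>_. count_space {1..m}))"
    using N1 N2 by (simp_all add: Omega_def)
  show "finite_measure N1" using N1(2) by (simp add: prob_space_def)
  fix A J assume J: "finite (J :: nat set)" and A: "\<And>i. i \<in> J \<Longrightarrow> A i \<in> sets (count_space {1..m})"
  obtain n where n: "J \<subseteq> {..<n}" using finite_nat_bounded[OF J] by blast
  define G where "G = {w \<in> Wl m n. \<forall>j\<in>J. w ! j \<in> A j}"
  have G: "G \<subseteq> Wl m n" by (auto simp: G_def)
  have E: "prod_emb UNIV (\<lambda>_. count_space {1..m}) J (Pi\<^sub>E J A) = {\<omega> \<in> space (Omega m). prefix \<omega> n \<in> G}"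
  proof (intro set_eqI)
    fix \<omega>
    have Jn: "\<And>i. i \<in> J \<Longrightarrow> i < n" using n by auto
    have L: "\<omega> \<in> prod_emb UNIV (\<lambda>_. count_space {1..m}) J (Pi\<^sub>E J A) \<longleftrightarrow>
        (\<forall>i. \<omega> i \<in> {1..m}) \<and> (\<forall>j\<in>J. \<omega> j \<in> A j)"
      by (auto simp: prod_emb_iff PiE_iff)
    have R: "\<omega> \<in> {\<omega> \<in> space (Omega m). prefix \<omega> n \<in> G} \<longleftrightarrow>
        (\<forall>i. \<omega> i \<in> {1..m}) \<and> (\<forall>j\<in>J. \<omega> j \<in> A j)"
    proof
      assume h: "\<omega> \<in> {\<omega> \<in> space (Omega m). prefix \<omega> n \<in> G}"
      hence "\<forall>i. \<omega> i \<in> {1..m}" by (simp add: space_Omega)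
      moreover have "\<forall>j\<in>J. \<omega> j \<in> A j"
        using h Jn nth_prefix[of _ n \<omega>] by (auto simp: G_def)
      ultimately show "(\<forall>i. \<omega> i \<in> {1..m}) \<and> (\<forall>j\<in>J. \<omega> j \<in> A j)" by blast
    next
      assume h: "(\<forall>i. \<omega> i \<in> {1..m}) \<and> (\<forall>j\<in>J. \<omega> j \<in> A j)"
      hence om: "\<omega> \<in> space (Omega m)" by (simp add: space_Omega)
      have "prefix \<omega> n \<in> Wl m n" using prefix_in[OF om] by (simp add: Wl_def)
      moreover have "\<forall>j\<in>J. prefix \<omega> n ! j \<in> A j" using h Jn nth_prefix[of _ n \<omega>] by auto
      ultimately show "\<omega> \<in> {\<omega> \<in> space (Omega m). prefix \<omega> n \<in> G}" using om by (simp add: G_def)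
    qed
    show "\<omega> \<in> prod_emb UNIV (\<lambda>_. count_space {1..m}) J (Pi\<^sub>E J A) \<longleftrightarrow>
        \<omega> \<in> {\<omega> \<in> space (Omega m). prefix \<omega> n \<in> G}" using L R by blast
  qed
  have "emeasure N1 {\<omega> \<in> space (Omega m). prefix \<omega> n \<in> G} = emeasure N2 {\<omega> \<in> space (Omega m). prefix \<omega> n \<in> G}"
    using emeasure_union_cyl[OF G, of N1] emeasure_union_cyl[OF G, of N2] N1 N2 eq G
    by (auto simp: Wl_def intro!: sum.cong)
  thus "emeasure N1 (prod_emb UNIV (\<lambda>_. count_space {1..m}) J (Pi\<^sub>E J A)) =
        emeasure N2 (prod_emb UNIV (\<lambda>_. count_space {1..m}) J (Pi\<^sub>E J A))" by (simp only: E)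
qed

primrec pth :: "nat \<Rightarrow> (nat list \<Rightarrow> nat) \<Rightarrow> nat list" where
  "pth 0 Y = []"
| "pth (Suc n) Y = pth n Y @ [Y (pth n Y)]"

lemma length_pth[simp]: "length (pth n Y) = n" by (induction n) auto

lemma prefix_pth: "prefix (\<lambda>n. Y (pth n Y)) n = pth n Y"
  by (induction n) (auto simp: prefix_Suc, simp add: prefix_def)

lemma pth_eq: "length w = n \<Longrightarrow> pth n Y = w \<longleftrightarrow> (\<forall>i<n. Y (take i w) = w ! i)"
proof (induction n arbitrary: w)
  case 0 thus ?case by simp
next
  case (Suc n)
  then obtain w' a where w: "w = w' @ [a]" and lw: "length w' = n" by (metis length_Suc_conv_rev)
  have "pth (Suc n) Y = w \<longleftrightarrow> pth n Y = w' \<and> Y w' = a"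
    using w by auto
  also have "\<dots> \<longleftrightarrow> (\<forall>i<n. Y (take i w') = w' ! i) \<and> Y w' = a" using Suc.IH[OF lw] by simp
  also have "\<dots> \<longleftrightarrow> (\<forall>i<Suc n. Y (take i w) = w ! i)"
    using lw by (auto simp: w nth_append less_Suc_eq)
  finally show ?case .
qed

lemma nu_exists:
  fixes pc :: "nat list \<Rightarrow> nat \<Rightarrow> real" and m :: nat
  assumes m: "m \<ge> 1"
    and pc0: "\<And>w j. set w \<subseteq> {1..m} \<Longrightarrow> j \<in> {1..m} \<Longrightarrow> pc w j \<ge> 0"
    and pc1: "\<And>w. set w \<subseteq> {1..m} \<Longrightarrow> (\<Sum>j=1..m. pc w j) = 1"
  shows "\<exists>N. sets N = sets (Omega m) \<and> prob_space N \<and>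
     (\<forall>w. set w \<subseteq> {1..m} \<longrightarrow> emeasure N (cyl m w) = ennreal (\<Prod>i<length w. pc (take i w) (w ! i)))"
proof -
  define fw where "fw v j = (if set v \<subseteq> {1..m} then pc v j else if j = 1 then 1 else 0)" for v j
  have fw0: "fw v j \<ge> 0" if "j \<in> {1..m}" for v j using pc0 that by (auto simp: fw_def)
  have fw1: "(\<Sum>j=1..m. fw v j) = 1" for v
  proof (cases "set v \<subseteq> {1..m}")
    case True thus ?thesis using pc1 by (simp add: fw_def)
  next
    case False
    have "(\<Sum>j=1..m. fw v j) = (\<Sum>j=1..m. if j = 1 then 1 else 0)" using False by (simp add: fw_def)
    also have "\<dots> = 1" using m by simp
    finally show ?thesis .
  qed
  define Mv where "Mv v = point_measure {1..m} (\<lambda>j. ennreal (fw v j))" for v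
  have spMv: "space (Mv v) = {1..m}" for v by (simp add: Mv_def space_point_measure)
  have setsMv: "sets (Mv v) = sets (count_space {1..m})" for v by (simp add: Mv_def sets_point_measure_count_space)
  have emMv: "emeasure (Mv v) {j} = ennreal (fw v j)" if "j \<in> {1..m}" for v j
    using that by (simp add: Mv_def emeasure_point_measure_finite)
  have probMv: "prob_space (Mv v)" for v
  proof
    have "emeasure (Mv v) (space (Mv v)) = (\<Sum>j\<in>{1..m}. ennreal (fw v j))"
      unfolding spMv by (simp add: Mv_def emeasure_point_measure_finite)
    also have "\<dots> = ennreal (\<Sum>j\<in>{1..m}. fw v j)" by (rule sum_ennreal[OF fw0])
    also have "\<dots> = 1" using fw1 by simp
    finally show "emeasure (Mv v) (space (Mv v)) = 1" .
  qed
  interpret PP: product_prob_space Mv "UNIV :: nat list set"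
    by (intro product_prob_spaceI probMv)
  define YM where "YM = PiM (UNIV :: nat list set) Mv"
  have coord: "(\<lambda>Y. Y v) \<in> measurable YM (count_space {1..m})" for v
    using measurable_component_singleton[of v UNIV Mv] measurable_cong_sets[OF refl setsMv[of v], of YM]
    unfolding YM_def by simp
  have mpth: "(\<lambda>Y. pth n Y) \<in> measurable YM (count_space UNIV)" for n
  proof (induction n)
    case 0 thus ?case by simp
  next
    case (Suc n)
    have "(\<lambda>Y. (\<lambda>v Y. v @ [Y v]) (pth n Y) Y) \<in> measurable YM (count_space UNIV)"
    proof (rule measurable_compose_countable'[OF _ Suc])
      fix v :: "nat list"
      show "(\<lambda>Y. v @ [Y v]) \<in> measurable YM (count_space UNIV)"
        by (rule measurable_compose[OF coord[of v]]) simp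
    qed simp
    thus ?case by simp
  qed
  have mcoord: "(\<lambda>Y. Y (pth n Y)) \<in> measurable YM (count_space {1..m})" for n
    by (rule measurable_compose_countable'[OF coord mpth]) simp
  have spYM: "Y \<in> space YM \<longleftrightarrow> (\<forall>v. Y v \<in> {1..m})" for Y
    by (simp add: YM_def space_PiM spMv PiE_iff)
  have mpath: "(\<lambda>Y n. Y (pth n Y)) \<in> measurable YM (Omega m)"
    unfolding Omega_def
    by (rule measurable_PiM_single'[OF mcoord]) (auto simp: spYM PiE_iff)
  have probYM: "prob_space YM" unfolding YM_def using PP.prob_space_axioms .
  define N where "N = distr YM (Omega m) (\<lambda>Y n. Y (pth n Y))"
  have "sets N = sets (Omega m)" by (simp add: N_def)
  moreover have "prob_space N" unfolding N_def by (rule prob_space.prob_space_distr[OF probYM mpath])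
  moreover have "emeasure N (cyl m w) = ennreal (\<Prod>i<length w. pc (take i w) (w ! i))"
    if w: "set w \<subseteq> {1..m}" for w
  proof -
    define n where "n = length w"
    define J where "J = (\<lambda>i. take i w) ` {..<n}"
    define X where "X v = {w ! length v}" for v :: "nat list"
    have wi: "w ! i \<in> {1..m}" if "i < n" for i
    proof -
      have "w ! i \<in> set w" using that by (simp add: n_def)
      thus ?thesis using w by blast
    qed
    have inj: "inj_on (\<lambda>i. take i w) {..<n}"
      by (rule inj_onI) (metis length_take min.absorb2 lessThan_iff less_imp_le n_def)
    have pre: "(\<lambda>Y n. Y (pth n Y)) -` cyl m w \<inter> space YM = prod_emb UNIV Mv J (Pi\<^sub>E J X)"
    proof (intro set_eqI)
      fix Y
      have "Y \<in> (\<lambda>Y n. Y (pth n Y)) -` cyl m w \<inter> space YM \<longleftrightarrow> Y \<in> space YM \<and> pth n Y = w"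
        using measurable_space[OF mpath] by (auto simp: cyl_mem prefix_pth n_def)
      also have "\<dots> \<longleftrightarrow> Y \<in> space YM \<and> (\<forall>i<n. Y (take i w) = w ! i)" using pth_eq[of w n Y] by (simp add: n_def)
      also have "\<dots> \<longleftrightarrow> Y \<in> prod_emb UNIV Mv J (Pi\<^sub>E J X)"
        by (auto simp: prod_emb_iff spYM[unfolded YM_def space_PiM] spMv J_def X_def PiE_iff n_def min_def
            space_PiM YM_def)
      finally show "Y \<in> (\<lambda>Y n. Y (pth n Y)) -` cyl m w \<inter> space YM \<longleftrightarrow> Y \<in> prod_emb UNIV Mv J (Pi\<^sub>E J X)" .
    qed
    have "emeasure N (cyl m w) = emeasure YM (prod_emb UNIV Mv J (Pi\<^sub>E J X))"
      unfolding N_def by (subst emeasure_distr[OF mpath cyl_sets]) (simp add: pre)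
    also have "\<dots> = (\<Prod>v\<in>J. emeasure (Mv v) (X v))" unfolding YM_def
    proof (rule PP.emeasure_PiM_emb)
      show "finite J" by (simp add: J_def)
      fix v assume "v \<in> J"
      then obtain i where "i < n" "v = take i w" by (auto simp: J_def)
      thus "X v \<in> sets (Mv v)" using wi by (simp add: setsMv X_def n_def min_def)
    qed simp
    also have "\<dots> = (\<Prod>i<n. emeasure (Mv (take i w)) (X (take i w)))"
      unfolding J_def by (rule prod.reindex[OF inj, unfolded comp_def])
    also have "\<dots> = (\<Prod>i<n. ennreal (pc (take i w) (w ! i)))"
    proof (rule prod.cong[OF refl])
      fix i assume "i \<in> {..<n}"
      hence i: "i < n" by simp
      have st: "set (take i w) \<subseteq> {1..m}" using w by (meson order_trans set_take_subset)
      show "emeasure (Mv (take i w)) (X (take i w)) = ennreal (pc (take i w) (w ! i))"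
        using i wi[OF i] st by (simp add: X_def emMv n_def min_def fw_def)
    qed
    also have "\<dots> = ennreal (\<Prod>i<n. pc (take i w) (w ! i))"
    proof (rule prod_ennreal)
      fix i assume "i \<in> {..<n}"
      hence i: "i < n" by simp
      have st: "set (take i w) \<subseteq> {1..m}" using w by (meson order_trans set_take_subset)
      show "0 \<le> pc (take i w) (w ! i)" by (rule pc0[OF st wi[OF i]])
    qed
    finally show ?thesis by (simp add: n_def)
  qed
  ultimately show ?thesis by blast
qed

theorem corollary5p4:
  fixes J R0 :: "'a::{real_inner,complete_space} \<Rightarrow> 'a"
    and P :: "nat \<Rightarrow> 'a \<Rightarrow> 'a" and m :: nat and q :: "nat \<Rightarrow> real" and x :: 'a
  assumes "cstruct J"
    and "m \<ge> 2"
    and "\<forall>j\<in>{1..m}. orth_proj J (P j)"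
    and "pos_op J R0"
    and "\<forall>j\<in>{1..m}. q j \<ge> 0" and "(\<Sum>j=1..m. q j) = 1"
    and "\<forall>v\<in>closure (range (op_sqrt R0)). (\<Sum>j=1..m. P j v) = v"
    and "inner x (R0 x) > 0"
  shows "(\<forall>n. (\<integral>\<omega>. inner x (Rw P R0 (prefix \<omega> n) x) \<partial>nu P R0 m q x)
               \<le> (1 - 1 / real m) ^ n * inner x (R0 x))
       \<and> (AE \<omega> in nu P R0 m q x. inner x (Rinf P R0 \<omega> x) = 0)"
proof -
  note asm = assms
  have m1: "m \<ge> 1" using asm(2) by simp
  have h1: "posop R0" using asm(4) by (simp add: pos_op_def is_op_def posop_def selfadj_def)
  have op: "orth_proj J (P j)" if "j \<in> {1..m}" for j using asm(3) that by blast
  have h2: "\<And>j. j \<in> {1..m} \<Longrightarrow> bounded_linear (P j)" using op by (simp add: orth_proj_def is_op_def)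
  have h3: "\<And>j x y. j \<in> {1..m} \<Longrightarrow> inner (P j x) y = inner x (P j y)" using op by (simp add: orth_proj_def)
  have h4: "\<And>j x. j \<in> {1..m} \<Longrightarrow> P j (P j x) = P j x" using op by (simp add: orth_proj_def)
  have h5: "\<And>v. v \<in> closure (range (op_sqrt R0)) \<Longrightarrow> (\<Sum>j=1..m. P j v) = v" using asm(7) by blast
  interpret wr R0 P m by (rule wr.intro[OF h1 h2 h3 h4 h5])
  note q0 = asm(5) and q1 = asm(6)
  let ?pc = "pcond P R0 m q x"
  let ?Prop = "\<lambda>N. sets N = sets (Omega m) \<and> prob_space N \<and>
      (\<forall>w. set w \<subseteq> {1..m} \<longrightarrow> emeasure N (cyl m w) = ennreal (\<Prod>i<length w. ?pc (take i w) (w ! i)))"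
  have ex: "\<exists>N. ?Prop N"
  proof (rule nu_exists[OF m1])
    fix w j assume w: "set w \<subseteq> {1..m}" and j: "j \<in> {1..m}"
    show "?pc w j \<ge> 0" by (rule pc_facts(1)[OF w q0 q1 m1 j])
  next
    fix w assume w: "set w \<subseteq> {1..m}"
    show "(\<Sum>j=1..m. ?pc w j) = 1" by (rule pc_facts(2)[OF w q0 q1 m1])
  qed
  have ex1: "\<exists>!N. ?Prop N"
  proof (rule ex_ex1I[OF ex])
    fix N1 N2 assume "?Prop N1" "?Prop N2"
    thus "N1 = N2" by (intro nu_unique[of N1 m N2]) auto
  qed
  have Pnu: "?Prop (nu P R0 m q x)" unfolding nu_def by (rule theI'[OF ex1])
  define \<nu> where "\<nu> = nu P R0 m q x"
  have sets_nu: "sets \<nu> = sets (Omega m)" and prob: "prob_space \<nu>"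
    and cylm: "\<And>w. set w \<subseteq> {1..m} \<Longrightarrow> emeasure \<nu> (cyl m w) = ennreal (piw q x w)"
    using Pnu by (auto simp: \<nu>_def piw_def)
  interpret prob_space \<nu> by (rule prob)
  have space_nu: "space \<nu> = space (Omega m)" using sets_eq_imp_space_eq[OF sets_nu] .
  have cyl_sets_nu: "cyl m w \<in> sets \<nu>" for w using cyl_sets sets_nu by simp
  have mcyl: "measure \<nu> (cyl m w) = piw q x w" if "set w \<subseteq> {1..m}" for w
    using cylm[OF that] piw_nonneg[OF that q0 q1 m1] by (simp add: measure_def)
  have pnn: "\<And>w. set w \<subseteq> {1..m} \<Longrightarrow> 0 \<le> piw q x w" using piw_nonneg[OF _ q0 q1 m1] by blast
  have pnn': "\<And>w. set w \<subseteq> {Suc 0..m} \<Longrightarrow> 0 \<le> piw q x w" using pnn by simp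
  have WnWl: "Wn n = Wl m n" for n by (simp add: Wn_def Wl_def)
  have integral_eq: "(\<integral>\<omega>. inner x (Rw P R0 (prefix \<omega> n) x) \<partial>\<nu>) = Exw q x n" for n
  proof -
    have "(\<integral>\<omega>. inner x (Rw P R0 (prefix \<omega> n) x) \<partial>\<nu>) = (\<integral>\<omega>. (\<Sum>w\<in>Wn n. indicator (cyl m w) \<omega> * Mw x w) \<partial>\<nu>)"
    proof (rule Bochner_Integration.integral_cong[OF refl])
      fix \<omega> assume om: "\<omega> \<in> space \<nu>"
      hence om': "\<omega> \<in> space (Omega m)" by (simp add: space_nu)
      have pin: "prefix \<omega> n \<in> Wn n" using prefix_in[OF om'] by (simp add: Wn_def)
      have "(\<Sum>w\<in>Wn n. indicator (cyl m w) \<omega> * Mw x w) = (\<Sum>w\<in>Wn n. if prefix \<omega> n = w then Mw x w else 0)"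
        by (intro sum.cong refl) (auto simp: cyl_mem[OF om'] Wn_def)
      also have "\<dots> = Mw x (prefix \<omega> n)" using pin finite_Wn by (simp add: sum.delta)
      finally show "inner x (Rw P R0 (prefix \<omega> n) x) = (\<Sum>w\<in>Wn n. indicator (cyl m w) \<omega> * Mw x w)"
        by (simp add: Mw_def)
    qed
    also have "\<dots> = (\<Sum>w\<in>Wn n. (\<integral>\<omega>. indicator (cyl m w) \<omega> * Mw x w \<partial>\<nu>))"
    proof (rule Bochner_Integration.integral_sum)
      fix w show "integrable \<nu> (\<lambda>\<omega>. indicator (cyl m w) \<omega> * Mw x w)"
        by (intro integrable_mult_left integrable_real_indicator cyl_sets_nu) (simp add: emeasure_eq_measure)
    qed
    also have "\<dots> = (\<Sum>w\<in>Wn n. piw q x w * Mw x w)"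
    proof (rule sum.cong[OF refl])
      fix w assume "w \<in> Wn n"
      hence w: "set w \<subseteq> {1..m}" by (simp add: Wn_def)
      have "cyl m w \<inter> space \<nu> = cyl m w" using sets.sets_into_space[OF cyl_sets_nu] by blast
      thus "(\<integral>\<omega>. indicator (cyl m w) \<omega> * Mw x w \<partial>\<nu>) = piw q x w * Mw x w"
        by (simp add: mcyl[OF w])
    qed
    finally show ?thesis by (simp add: Exw_def)
  qed
  have part1: "\<forall>n. (\<integral>\<omega>. inner x (Rw P R0 (prefix \<omega> n) x) \<partial>\<nu>) \<le> (1 - 1 / real m) ^ n * inner x (R0 x)"
    using integral_eq Exw_bound[OF q0 q1 m1] by simp
  define M0 where "M0 = inner x (R0 x)"
  define r where "r = 1 - 1 / real m"
  have r: "0 \<le> r" "r < 1" using m1 by (auto simp: r_def field_simps)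
  have rlim: "(\<lambda>n. r ^ n * M0 / e) \<longlonglongrightarrow> 0" for e
    using tendsto_divide[OF tendsto_mult[OF LIMSEQ_power_zero[of r] tendsto_const[of M0]] tendsto_const[of e]] r
    by (cases "e = 0") auto
  have AEk: "AE \<omega> in \<nu>. \<exists>n. Mw x (prefix \<omega> n) < e" if e: "e > 0" for e
  proof -
    define G where "G n = {w \<in> Wn n. Mw x w \<ge> e}" for n
    define Bn where "Bn n = {\<omega> \<in> space (Omega m). prefix \<omega> n \<in> G n}" for n
    have GW: "G n \<subseteq> Wl m n" for n by (auto simp: G_def WnWl)
    have Bsets: "Bn n \<in> sets \<nu>" for n
    proof -
      have "Bn n = (\<Union>w\<in>G n. cyl m w)" unfolding Bn_def by (rule union_cyl[OF GW, symmetric])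
      also have "\<dots> \<in> sets \<nu>" using finite_Wn[of n] by (auto simp: G_def cyl_sets_nu)
      finally show ?thesis .
    qed
    have Bmeas: "measure \<nu> (Bn n) \<le> r ^ n * M0 / e" for n
    proof -
      have "emeasure \<nu> (Bn n) = (\<Sum>w\<in>G n. emeasure \<nu> (cyl m w))"
        unfolding Bn_def by (rule emeasure_union_cyl[OF GW sets_nu])
      also have "\<dots> = (\<Sum>w\<in>G n. ennreal (piw q x w))"
        by (intro sum.cong refl cylm) (auto simp: G_def Wn_def)
      also have "\<dots> = ennreal (\<Sum>w\<in>G n. piw q x w)"
        by (rule sum_ennreal) (auto simp: G_def Wn_def intro: pnn')
      finally have em: "emeasure \<nu> (Bn n) = ennreal (\<Sum>w\<in>G n. piw q x w)" .
      have snn: "0 \<le> (\<Sum>w\<in>G n. piw q x w)" by (rule sum_nonneg) (auto simp: G_def Wn_def intro: pnn')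
      have "measure \<nu> (Bn n) = (\<Sum>w\<in>G n. piw q x w)" using em snn by (simp add: measure_def)
      also have "\<dots> \<le> (\<Sum>w\<in>G n. piw q x w * Mw x w / e)"
      proof (rule sum_mono)
        fix w assume "w \<in> G n"
        hence "Mw x w \<ge> e" "set w \<subseteq> {1..m}" by (auto simp: G_def Wn_def)
        moreover have "piw q x w \<ge> 0" using calculation(2) by (rule piw_nonneg[OF _ q0 q1 m1])
        ultimately have "e * piw q x w \<le> Mw x w * piw q x w" by (intro mult_right_mono)
        thus "piw q x w \<le> piw q x w * Mw x w / e" using e by (simp add: field_simps)
      qed
      also have "\<dots> \<le> (\<Sum>w\<in>Wn n. piw q x w * Mw x w / e)"
      proof (rule sum_mono2[OF finite_Wn])
        show "G n \<subseteq> Wn n" by (auto simp: G_def)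
        fix w assume "w \<in> Wn n - G n"
        hence "set w \<subseteq> {1..m}" by (simp add: Wn_def)
        thus "0 \<le> piw q x w * Mw x w / e" using e
          by (intro divide_nonneg_pos mult_nonneg_nonneg piw_nonneg[OF _ q0 q1 m1] word_facts(1)) auto
      qed
      also have "\<dots> = Exw q x n / e" by (simp add: Exw_def sum_divide_distrib)
      also have "\<dots> \<le> r ^ n * M0 / e" using Exw_bound[OF q0 q1 m1, of x n] e
        by (simp add: r_def M0_def divide_right_mono)
      finally show ?thesis .
    qed
    define Ninf where "Ninf = (\<Inter>n. Bn n)"
    have Nsets: "Ninf \<in> sets \<nu>" unfolding Ninf_def using Bsets by auto
    have "measure \<nu> Ninf \<le> 0"
    proof (rule LIMSEQ_le_const[OF rlim[of e]])
      show "\<exists>N. \<forall>n\<ge>N. measure \<nu> Ninf \<le> r ^ n * M0 / e"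
      proof (intro exI allI impI)
        fix n
        have "measure \<nu> Ninf \<le> measure \<nu> (Bn n)"
          by (rule finite_measure_mono) (auto simp: Ninf_def Bsets)
        thus "measure \<nu> Ninf \<le> r ^ n * M0 / e" using Bmeas[of n] by linarith
      qed
    qed
    hence "measure \<nu> Ninf = 0" using measure_nonneg[of \<nu> Ninf] by linarith
    hence "emeasure \<nu> Ninf = 0" by (simp add: emeasure_eq_measure)
    hence "Ninf \<in> null_sets \<nu>" using Nsets by (rule null_setsI)
    moreover have "{\<omega> \<in> space \<nu>. \<not> (\<exists>n. Mw x (prefix \<omega> n) < e)} \<subseteq> Ninf"
    proof
      fix \<omega> assume "\<omega> \<in> {\<omega> \<in> space \<nu>. \<not> (\<exists>n. Mw x (prefix \<omega> n) < e)}"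
      hence om: "\<omega> \<in> space (Omega m)" and ge: "\<And>n. Mw x (prefix \<omega> n) \<ge> e" by (auto simp: space_nu not_less)
      show "\<omega> \<in> Ninf" unfolding Ninf_def Bn_def G_def using om ge prefix_in[OF om] by (auto simp: Wn_def)
    qed
    ultimately show ?thesis by (rule AE_I')
  qed
  have "AE \<omega> in \<nu>. \<forall>k::nat. \<exists>n. Mw x (prefix \<omega> n) < 1 / real (Suc k)"
    unfolding AE_all_countable by (intro allI AEk) simp
  hence part2: "AE \<omega> in \<nu>. inner x (Rinf P R0 \<omega> x) = 0"
  proof (rule AE_mp[OF _ AE_I2[OF impI]])
    fix \<omega> assume om: "\<omega> \<in> space \<nu>" and h: "\<forall>k::nat. \<exists>n. Mw x (prefix \<omega> n) < 1 / real (Suc k)"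
    hence om': "\<omega> \<in> space (Omega m)" by (simp add: space_nu)
    define Mn where "Mn n = Mw x (prefix \<omega> n)" for n
    have win: "set (prefix \<omega> n) \<subseteq> {1..m}" for n by (rule prefix_in[OF om'])
    have Mn0: "Mn n \<ge> 0" for n unfolding Mn_def by (rule word_facts(1)[OF win])
    have dec: "decseq Mn"
    proof (rule decseq_SucI)
      fix n
      have on: "\<omega> n \<in> {1..m}" using om' by (simp add: space_Omega)
      have "Mn (Suc n) = Mn n - aw x (prefix \<omega> n) (\<omega> n)"
        unfolding Mn_def prefix_Suc by (rule word_facts(3)[OF win on])
      thus "Mn (Suc n) \<le> Mn n" using word_facts(2)[OF win on] by simp
    qed
    have Mlim: "Mn \<longlonglongrightarrow> 0"
    proof (rule LIMSEQ_I)
      fix e :: real assume e: "e > 0"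
      obtain k :: nat where k: "1 / real (Suc k) < e" using e
        by (metis nat_approx_posE)
      obtain n0 where n0: "Mn n0 < 1 / real (Suc k)" using h by (auto simp: Mn_def)
      show "\<exists>no. \<forall>n\<ge>no. norm (Mn n - 0) < e"
      proof (intro exI allI impI)
        fix n assume "n0 \<le> n"
        hence "Mn n \<le> Mn n0" using dec by (simp add: decseqD)
        thus "norm (Mn n - 0) < e" using Mn0[of n] n0 k by simp
      qed
    qed
    have "(\<lambda>n. Rw P R0 (prefix \<omega> n) x) \<longlonglongrightarrow> 0"
    proof (rule Lim_null_comparison)
      show "\<forall>\<^sub>F n in sequentially. norm (Rw P R0 (prefix \<omega> n) x) \<le> sqrt (B * Mn n)"
      proof (intro always_eventually allI)
        fix n
        show "norm (Rw P R0 (prefix \<omega> n) x) \<le> sqrt (B * Mn n)"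
          using word_facts(5)[OF win, of n x] by (intro real_le_rsqrt) (simp add: Mn_def)
      qed
      show "(\<lambda>n. sqrt (B * Mn n)) \<longlonglongrightarrow> 0"
        using tendsto_real_sqrt[OF tendsto_mult[OF tendsto_const[of B] Mlim]] by simp
    qed
    hence "Rinf P R0 \<omega> x = 0" unfolding Rinf_def by (rule limI)
    thus "inner x (Rinf P R0 \<omega> x) = 0" by simp
  qed
  show ?thesis using part1 part2 unfolding \<nu>_def by blast
qed

end
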